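(* Let $A$ be a Banach algebra and $\phi\in\Delta(A)$. If $A$ is pseudo-amenable, or if $A$ is approximately amenable, then $A$ is approximately left $\phi$-biprojective.
   Context: $\Delta(A)$ is the set of characters of $A$; $A\otimes_pA$ is the projective tensor product with $a\cdot(b\otimes c)=ab\otimes c$, $(b\otimes c)\cdot a=b\otimes ca$, $\pi_A(a\otimes b)=ab$. $A$ is pseudo-amenable if there is a (not necessarily bounded) net $(m_\alpha)$ in $A\otimes_pA$ with $a\cdot m_\alpha-m_\alpha\cdot a\to0$ and $\pi_A(m_\alpha)a\to a$ for all $a\in A$. $A$ is approximately amenable if for every Banach $A$-bimodule $X$ and every continuous derivation $D:A\to X^*$ there is a net $(x_\alpha)$ in $X^*$ with $D(a)=\lim_\alpha(a\cdot x_\alpha-x_\alpha\cdot a)$ for all $a\in A$. $A$ is approximately left $\phi$-biprojective if there is a net $(\rho_\alpha)$ of bounded linear maps $A\to A\otimes_pA$ such that for all $a,x\in A$: $\|a\cdot\rho_\alpha(x)-\rho_\alpha(ax)\|\to0$, $\|\rho_\alpha(xa)-\phi(a)\rho_\alpha(x)\|\to0$, and $\phi(\pi_A(\rho_\alpha(x)))-\phi(x)\to0$. *)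

theory Defs
  imports "HOL-Analysis.Analysis"
begin

class complex_banach_algebra = real_normed_algebra + banach +
  fixes scaleC :: "complex \<Rightarrow> 'a \<Rightarrow> 'a"
  assumes scaleC_add_right: "scaleC c (x + y) = scaleC c x + scaleC c y"
    and scaleC_add_left: "scaleC (c + d) x = scaleC c x + scaleC d x"
    and scaleC_scaleC: "scaleC c (scaleC d x) = scaleC (c * d) x"
    and scaleC_one: "scaleC 1 x = x"
    and scaleC_of_real: "scaleC (of_real r) x = scaleR r x"
    and norm_scaleC: "norm (scaleC c x) = cmod c * norm x"
    and mult_scaleC_left: "scaleC c x * y = scaleC c (x * y)"
    and mult_scaleC_right: "x * scaleC c y = scaleC c (x * y)"

definition is_character :: "('a::complex_banach_algebra \<Rightarrow> complex) \<Rightarrow> bool" where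
  "is_character \<phi> \<longleftrightarrow>
     (\<forall>x y. \<phi> (x + y) = \<phi> x + \<phi> y) \<and>
     (\<forall>c x. \<phi> (scaleC c x) = c * \<phi> x) \<and>
     (\<forall>x y. \<phi> (x * y) = \<phi> x * \<phi> y) \<and>
     (\<exists>x. \<phi> x \<noteq> 0)"

text \<open>Elements of the projective tensor product are represented by sequences
  (a_n, b_n) with sum of norm a_n * norm b_n finite (the element sum a_n \<otimes> b_n).
  Two representations denote the same element iff every bounded bilinear form
  (the dual of A \<otimes>p A) takes the same value on them; the projective norm is the
  infimum of sum norm a_n * norm b_n over all representations.\<close>

definition trep :: "(nat \<Rightarrow> 'a::complex_banach_algebra \<times> 'a) \<Rightarrow> bool" where
  "trep t \<longleftrightarrow> summable (\<lambda>n. norm (fst (t n)) * norm (snd (t n)))"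

definition bounded_bilinear_form :: "('a::complex_banach_algebra \<Rightarrow> 'a \<Rightarrow> complex) \<Rightarrow> bool" where
  "bounded_bilinear_form B \<longleftrightarrow>
     (\<forall>a b c. B (a + b) c = B a c + B b c) \<and>
     (\<forall>a b c. B a (b + c) = B a b + B a c) \<and>
     (\<forall>k a b. B (scaleC k a) b = k * B a b) \<and>
     (\<forall>k a b. B a (scaleC k b) = k * B a b) \<and>
     (\<exists>K. \<forall>a b. cmod (B a b) \<le> K * norm a * norm b)"

definition tev :: "('a::complex_banach_algebra \<Rightarrow> 'a \<Rightarrow> complex) \<Rightarrow> (nat \<Rightarrow> 'a \<times> 'a) \<Rightarrow> complex" where
  "tev B t = (\<Sum>n. B (fst (t n)) (snd (t n)))"

definition teq :: "(nat \<Rightarrow> 'a::complex_banach_algebra \<times> 'a) \<Rightarrow> (nat \<Rightarrow> 'a \<times> 'a) \<Rightarrow> bool" where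
  "teq t s \<longleftrightarrow> (\<forall>B. bounded_bilinear_form B \<longrightarrow> tev B t = tev B s)"

definition pnorm :: "(nat \<Rightarrow> 'a::complex_banach_algebra \<times> 'a) \<Rightarrow> real" where
  "pnorm t = Inf {(\<Sum>n. norm (fst (s n)) * norm (snd (s n))) | s. trep s \<and> teq s t}"

definition tlact :: "'a::complex_banach_algebra \<Rightarrow> (nat \<Rightarrow> 'a \<times> 'a) \<Rightarrow> (nat \<Rightarrow> 'a \<times> 'a)" where
  "tlact a t = (\<lambda>n. (a * fst (t n), snd (t n)))"

definition tract :: "(nat \<Rightarrow> 'a::complex_banach_algebra \<times> 'a) \<Rightarrow> 'a \<Rightarrow> (nat \<Rightarrow> 'a \<times> 'a)" where
  "tract t a = (\<lambda>n. (fst (t n), snd (t n) * a))"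

definition tscale :: "complex \<Rightarrow> (nat \<Rightarrow> 'a::complex_banach_algebra \<times> 'a) \<Rightarrow> (nat \<Rightarrow> 'a \<times> 'a)" where
  "tscale c t = (\<lambda>n. (scaleC c (fst (t n)), snd (t n)))"

definition tadd :: "(nat \<Rightarrow> 'a::complex_banach_algebra \<times> 'a) \<Rightarrow> (nat \<Rightarrow> 'a \<times> 'a) \<Rightarrow> (nat \<Rightarrow> 'a \<times> 'a)" where
  "tadd t s = (\<lambda>n. if even n then t (n div 2) else s (n div 2))"

definition tdiff :: "(nat \<Rightarrow> 'a::complex_banach_algebra \<times> 'a) \<Rightarrow> (nat \<Rightarrow> 'a \<times> 'a) \<Rightarrow> (nat \<Rightarrow> 'a \<times> 'a)" where
  "tdiff t s = tadd t (tscale (-1) s)"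

definition tpi :: "(nat \<Rightarrow> 'a::complex_banach_algebra \<times> 'a) \<Rightarrow> 'a" where
  "tpi t = (\<Sum>n. fst (t n) * snd (t n))"

text \<open>A net in A \<otimes>p A is encoded by a proper filter on representations (any net
  induces such a filter, its image filter, and conversely).\<close>

definition pseudo_amenable :: "'a::complex_banach_algebra itself \<Rightarrow> bool" where
  "pseudo_amenable _ \<longleftrightarrow>
     (\<exists>F :: (nat \<Rightarrow> 'a \<times> 'a) filter.
        F \<noteq> bot \<and> eventually trep F \<and>
        (\<forall>a. ((\<lambda>m. pnorm (tdiff (tlact a m) (tract m a))) \<longlongrightarrow> 0) F) \<and>
        (\<forall>a. ((\<lambda>m. tpi m * a) \<longlongrightarrow> a) F))"

record ('a, 'x) bimod =
  bcarrier :: "'x set"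
  bzero :: 'x
  badd :: "'x \<Rightarrow> 'x \<Rightarrow> 'x"
  bscale :: "complex \<Rightarrow> 'x \<Rightarrow> 'x"
  bnorm :: "'x \<Rightarrow> real"
  blact :: "'a \<Rightarrow> 'x \<Rightarrow> 'x"
  bract :: "'x \<Rightarrow> 'a \<Rightarrow> 'x"

definition banach_bimodule :: "('a::complex_banach_algebra, 'x) bimod \<Rightarrow> bool" where
  "banach_bimodule M \<longleftrightarrow>
    (let C = bcarrier M; z = bzero M; ad = badd M; sc = bscale M; nm = bnorm M;
         la = blact M; ra = bract M in
     \<comment> \<open>closure\<close>
     z \<in> C \<and>
     (\<forall>x\<in>C. \<forall>y\<in>C. ad x y \<in> C) \<and>
     (\<forall>c. \<forall>x\<in>C. sc c x \<in> C) \<and>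
     (\<forall>a. \<forall>x\<in>C. la a x \<in> C) \<and>
     (\<forall>a. \<forall>x\<in>C. ra x a \<in> C) \<and>
     \<comment> \<open>complex vector space\<close>
     (\<forall>x\<in>C. \<forall>y\<in>C. \<forall>w\<in>C. ad (ad x y) w = ad x (ad y w)) \<and>
     (\<forall>x\<in>C. \<forall>y\<in>C. ad x y = ad y x) \<and>
     (\<forall>x\<in>C. ad z x = x) \<and>
     (\<forall>x\<in>C. ad x (sc (-1) x) = z) \<and>
     (\<forall>c. \<forall>x\<in>C. \<forall>y\<in>C. sc c (ad x y) = ad (sc c x) (sc c y)) \<and>
     (\<forall>c d. \<forall>x\<in>C. sc (c + d) x = ad (sc c x) (sc d x)) \<and>
     (\<forall>c d. \<forall>x\<in>C. sc c (sc d x) = sc (c * d) x) \<and>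
     (\<forall>x\<in>C. sc 1 x = x) \<and>
     \<comment> \<open>norm\<close>
     (\<forall>x\<in>C. nm x \<ge> 0) \<and>
     (\<forall>x\<in>C. nm x = 0 \<longleftrightarrow> x = z) \<and>
     (\<forall>x\<in>C. \<forall>y\<in>C. nm (ad x y) \<le> nm x + nm y) \<and>
     (\<forall>c. \<forall>x\<in>C. nm (sc c x) = cmod c * nm x) \<and>
     \<comment> \<open>completeness\<close>
     (\<forall>s. (\<forall>n. s n \<in> C) \<longrightarrow>
          (\<forall>e>0. \<exists>N. \<forall>m\<ge>N. \<forall>n\<ge>N. nm (ad (s m) (sc (-1) (s n))) < e) \<longrightarrow>
          (\<exists>l\<in>C. (\<lambda>n. nm (ad (s n) (sc (-1) l))) \<longlonglongrightarrow> 0)) \<and>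
     \<comment> \<open>bimodule axioms\<close>
     (\<forall>a b. \<forall>x\<in>C. la (a * b) x = la a (la b x)) \<and>
     (\<forall>a b. \<forall>x\<in>C. ra x (a * b) = ra (ra x a) b) \<and>
     (\<forall>a b. \<forall>x\<in>C. ra (la a x) b = la a (ra x b)) \<and>
     (\<forall>a b. \<forall>x\<in>C. la (a + b) x = ad (la a x) (la b x)) \<and>
     (\<forall>a b. \<forall>x\<in>C. ra x (a + b) = ad (ra x a) (ra x b)) \<and>
     (\<forall>a. \<forall>x\<in>C. \<forall>y\<in>C. la a (ad x y) = ad (la a x) (la a y)) \<and>
     (\<forall>a. \<forall>x\<in>C. \<forall>y\<in>C. ra (ad x y) a = ad (ra x a) (ra y a)) \<and>
     (\<forall>c a. \<forall>x\<in>C. la (scaleC c a) x = sc c (la a x)) \<and>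
     (\<forall>c a. \<forall>x\<in>C. ra x (scaleC c a) = sc c (ra x a)) \<and>
     (\<forall>c a. \<forall>x\<in>C. la a (sc c x) = sc c (la a x)) \<and>
     (\<forall>c a. \<forall>x\<in>C. ra (sc c x) a = sc c (ra x a)) \<and>
     (\<exists>K. \<forall>a. \<forall>x\<in>C. nm (la a x) \<le> K * norm a * nm x) \<and>
     (\<exists>K. \<forall>a. \<forall>x\<in>C. nm (ra x a) \<le> K * norm a * nm x))"

text \<open>The dual X*: bounded linear functionals on the carrier (compared on the carrier only).\<close>

definition in_dual :: "('a, 'x) bimod \<Rightarrow> ('x \<Rightarrow> complex) \<Rightarrow> bool" where
  "in_dual M f \<longleftrightarrow>
     (\<forall>x\<in>bcarrier M. \<forall>y\<in>bcarrier M. f (badd M x y) = f x + f y) \<and>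
     (\<forall>c. \<forall>x\<in>bcarrier M. f (bscale M c x) = c * f x) \<and>
     (\<exists>K. \<forall>x\<in>bcarrier M. cmod (f x) \<le> K * bnorm M x)"

definition dnorm :: "('a, 'x) bimod \<Rightarrow> ('x \<Rightarrow> complex) \<Rightarrow> real" where
  "dnorm M f = Sup ((\<lambda>x. cmod (f x)) ` {x \<in> bcarrier M. bnorm M x \<le> 1})"

definition dlact :: "('a, 'x) bimod \<Rightarrow> 'a \<Rightarrow> ('x \<Rightarrow> complex) \<Rightarrow> ('x \<Rightarrow> complex)" where
  "dlact M a f = (\<lambda>x. f (bract M x a))"

definition dract :: "('a, 'x) bimod \<Rightarrow> ('x \<Rightarrow> complex) \<Rightarrow> 'a \<Rightarrow> ('x \<Rightarrow> complex)" where
  "dract M f a = (\<lambda>x. f (blact M a x))"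

definition continuous_derivation ::
  "('a::complex_banach_algebra, 'x) bimod \<Rightarrow> ('a \<Rightarrow> 'x \<Rightarrow> complex) \<Rightarrow> bool" where
  "continuous_derivation M D \<longleftrightarrow>
     (\<forall>a. in_dual M (D a)) \<and>
     (\<forall>a b. \<forall>x\<in>bcarrier M. D (a + b) x = D a x + D b x) \<and>
     (\<forall>c a. \<forall>x\<in>bcarrier M. D (scaleC c a) x = c * D a x) \<and>
     (\<forall>a b. \<forall>x\<in>bcarrier M. D (a * b) x = dlact M a (D b) x + dract M (D a) b x) \<and>
     (\<exists>K. \<forall>a. dnorm M (D a) \<le> K * norm a)"

definition approx_inner ::
  "('a::complex_banach_algebra, 'x) bimod \<Rightarrow> ('a \<Rightarrow> 'x \<Rightarrow> complex) \<Rightarrow> bool" where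
  "approx_inner M D \<longleftrightarrow>
     (\<exists>F :: ('x \<Rightarrow> complex) filter.
        F \<noteq> bot \<and> eventually (in_dual M) F \<and>
        (\<forall>a. ((\<lambda>f. dnorm M (\<lambda>x. D a x - (dlact M a f x - dract M f a x))) \<longlongrightarrow> 0) F))"

definition approximately_amenable :: "'a::complex_banach_algebra itself \<Rightarrow> bool" where
  "approximately_amenable _ \<longleftrightarrow>
     (\<forall>(M :: ('a, ('a \<Rightarrow> complex) \<Rightarrow> complex) bimod) D.
        banach_bimodule M \<and> continuous_derivation M D \<longrightarrow> approx_inner M D)"

text \<open>A bounded linear map A \<rightarrow> A \<otimes>p A is encoded as a map into representations that
  is linear modulo equivalence of representations and bounded for the projective norm.\<close>

definition bounded_linear_to_tensor ::
  "('a::complex_banach_algebra \<Rightarrow> (nat \<Rightarrow> 'a \<times> 'a)) \<Rightarrow> bool" where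
  "bounded_linear_to_tensor \<rho> \<longleftrightarrow>
     (\<forall>x. trep (\<rho> x)) \<and>
     (\<forall>x y. teq (\<rho> (x + y)) (tadd (\<rho> x) (\<rho> y))) \<and>
     (\<forall>c x. teq (\<rho> (scaleC c x)) (tscale c (\<rho> x))) \<and>
     (\<exists>K. \<forall>x. pnorm (\<rho> x) \<le> K * norm x)"

definition approx_left_phi_biprojective ::
  "('a::complex_banach_algebra \<Rightarrow> complex) \<Rightarrow> bool" where
  "approx_left_phi_biprojective \<phi> \<longleftrightarrow>
     (\<exists>F :: ('a \<Rightarrow> (nat \<Rightarrow> 'a \<times> 'a)) filter.
        F \<noteq> bot \<and> eventually bounded_linear_to_tensor F \<and>
        (\<forall>a x. ((\<lambda>\<rho>. pnorm (tdiff (tlact a (\<rho> x)) (\<rho> (a * x)))) \<longlongrightarrow> 0) F) \<and>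
        (\<forall>a x. ((\<lambda>\<rho>. pnorm (tdiff (\<rho> (x * a)) (tscale (\<phi> a) (\<rho> x)))) \<longlongrightarrow> 0) F) \<and>
        (\<forall>x. ((\<lambda>\<rho>. \<phi> (tpi (\<rho> x)) - \<phi> x) \<longlongrightarrow> 0) F))"

end

theory Submission
  imports Defs "HOL-Library.Function_Algebras"
begin

lemma char_add: "is_character \<phi> \<Longrightarrow> \<phi> (x + y) = \<phi> x + \<phi> y"
  by (simp add: is_character_def)
lemma char_scaleC: "is_character \<phi> \<Longrightarrow> \<phi> (scaleC c x) = c * \<phi> x"
  by (simp add: is_character_def)
lemma char_mult: "is_character \<phi> \<Longrightarrow> \<phi> (x * y) = \<phi> x * \<phi> y"
  by (simp add: is_character_def)
lemma char_zero: "is_character \<phi> \<Longrightarrow> \<phi> 0 = 0"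
  using char_add[of \<phi> 0 0] by simp
lemma char_minus: "is_character \<phi> \<Longrightarrow> \<phi> (- x) = - \<phi> x"
  using char_add[of \<phi> x "-x"] char_zero[of \<phi>] by (simp add: eq_neg_iff_add_eq_0 add.commute)
lemma char_diff: "is_character \<phi> \<Longrightarrow> \<phi> (x - y) = \<phi> x - \<phi> y"
  using char_add[of \<phi> x "-y"] char_minus[of \<phi> y] by simp
lemma char_scaleR: "is_character \<phi> \<Longrightarrow> \<phi> (scaleR r x) = of_real r * \<phi> x"
  using char_scaleC[of \<phi> "of_real r" x] by (simp add: scaleC_of_real)

lemma scaleC_zero_right: "scaleC c (0::'a::complex_banach_algebra) = 0"
  using scaleC_add_right[of c "0::'a" 0] by simp
lemma scaleC_zero_left: "scaleC 0 (x::'a::complex_banach_algebra) = 0"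
  using scaleC_of_real[of 0 x] by simp
lemma scaleC_minus_right: "scaleC c (- x::'a::complex_banach_algebra) = - scaleC c x"
  using scaleC_add_right[of c x "-x"] by (simp add: scaleC_zero_right eq_neg_iff_add_eq_0 add.commute)
lemma scaleC_diff_right: "scaleC c (x - y::'a::complex_banach_algebra) = scaleC c x - scaleC c y"
  using scaleC_add_right[of c x "-y"] by (simp add: scaleC_minus_right)
lemma scaleC_minus1: "scaleC (-1) (x::'a::complex_banach_algebra) = - x"
  using scaleC_of_real[of "-1" x] by simp
lemma scaleC_diff_left: "scaleC (c - d) (x::'a::complex_banach_algebra) = scaleC c x - scaleC d x"
  using scaleC_add_left[of c "-d" x] scaleC_scaleC[of "-1" d x] scaleC_minus1[of "scaleC d x"] by simp
lemma scaleC_scaleR_comm: "scaleC c (scaleR r x) = scaleR r (scaleC c (x::'a::complex_banach_algebra))"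
  by (metis mult.commute scaleC_of_real scaleC_scaleC)

lemma bounded_linear_scaleC: "bounded_linear (scaleC c :: 'a::complex_banach_algebra \<Rightarrow> 'a)"
  by (rule bounded_linear_intro[where K="cmod c"]) (auto simp: scaleC_add_right scaleC_scaleR_comm norm_scaleC)

lemma char_bound:
  fixes \<phi> :: "'a::complex_banach_algebra \<Rightarrow> complex"
  assumes ch: "is_character \<phi>"
  shows "cmod (\<phi> x) \<le> norm x"
proof (rule ccontr)
  assume "\<not> ?thesis"
  hence lt: "norm x < cmod (\<phi> x)" by simp
  hence nz: "\<phi> x \<noteq> 0" by auto
  define y where "y = scaleC (1 / \<phi> x) x"
  have py: "\<phi> y = 1" using nz by (simp add: y_def char_scaleC[OF ch])
  have ny: "norm y < 1" using lt nz by (simp add: y_def norm_scaleC norm_divide field_simps)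
  define p where "p = rec_nat y (\<lambda>_ q. y * q)"
  have p0: "p 0 = y" and pS: "\<And>n. p (Suc n) = y * p n" by (simp_all add: p_def)
  have pb: "norm (p n) \<le> norm y ^ Suc n" for n
  proof (induction n)
    case 0 then show ?case by (simp add: p0)
  next
    case (Suc n)
    have "norm (p (Suc n)) \<le> norm y * norm (p n)" by (simp add: pS norm_mult_ineq)
    also have "\<dots> \<le> norm y * norm y ^ Suc n" by (rule mult_left_mono[OF Suc]) simp
    finally show ?case by simp
  qed
  have sg: "summable (\<lambda>n. norm y ^ Suc n)"
    using summable_geometric[of "norm y"] ny by (simp add: summable_mult)
  have sp: "summable p"
    by (rule summable_comparison_test[OF _ sg]) (use pb in auto)
  define z where "z = suminf p"
  have "(\<lambda>n. y * p n) sums (y * z)"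
    unfolding z_def by (rule bounded_linear.sums[OF bounded_linear_mult_right]) (use sp in \<open>simp add: summable_sums\<close>)
  hence "(\<lambda>n. p (Suc n)) sums (y * z)" by (simp add: pS)
  hence "p sums (y * z + p 0)" by (simp add: sums_Suc_iff)
  hence "z = y * z + y" using sp by (simp add: z_def sums_iff p0)
  hence "\<phi> z = \<phi> y * \<phi> z + \<phi> y" by (metis char_add[OF ch] char_mult[OF ch])
  thus False using py by simp
qed

lemma char_bounded_linear: "is_character \<phi> \<Longrightarrow> bounded_linear \<phi>"
  by (rule bounded_linear_intro[where K=1]) (auto simp: char_add char_scaleR char_bound scaleR_conv_of_real)

lemma char_unit: "is_character \<phi> \<Longrightarrow> \<exists>u. \<phi> u = 1"
  apply (clarsimp simp: is_character_def)
  subgoal for x by (rule exI[of _ "scaleC (1/\<phi> x) x"]) simp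
  done

lemma bbf_add1: "bounded_bilinear_form B \<Longrightarrow> B (a + b) c = B a c + B b c"
  by (simp add: bounded_bilinear_form_def)
lemma bbf_add2: "bounded_bilinear_form B \<Longrightarrow> B a (b + c) = B a b + B a c"
  by (simp add: bounded_bilinear_form_def)
lemma bbf_scale1: "bounded_bilinear_form B \<Longrightarrow> B (scaleC k a) b = k * B a b"
  by (simp add: bounded_bilinear_form_def)
lemma bbf_scale2: "bounded_bilinear_form B \<Longrightarrow> B a (scaleC k b) = k * B a b"
  by (simp add: bounded_bilinear_form_def)
lemma bbf_bound: "bounded_bilinear_form B \<Longrightarrow> \<exists>K. \<forall>a b. cmod (B a b) \<le> K * norm a * norm b"
  by (simp add: bounded_bilinear_form_def)
lemma bbf_zero1: "bounded_bilinear_form B \<Longrightarrow> B 0 b = 0"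
  using bbf_add1[of B 0 0 b] by simp
lemma bbf_diff1: "bounded_bilinear_form B \<Longrightarrow> B (a - a') b = B a b - B a' b"
  using bbf_add1[of B "a - a'" a' b] by (simp add: algebra_simps)

definition tval :: "(nat \<Rightarrow> 'a::complex_banach_algebra \<times> 'a) \<Rightarrow> real" where
  "tval t = (\<Sum>n. norm (fst (t n)) * norm (snd (t n)))"

lemma tev_summable:
  assumes "trep t" "bounded_bilinear_form B"
  shows "summable (\<lambda>n. B (fst (t n)) (snd (t n)))"
proof -
  obtain K where K: "\<And>a b. cmod (B a b) \<le> K * norm a * norm b" using bbf_bound[OF assms(2)] by blast
  have s: "summable (\<lambda>n. K * (norm (fst (t n)) * norm (snd (t n))))"
    using assms(1) by (simp add: trep_def summable_mult)
  show ?thesis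
    by (rule summable_comparison_test[OF _ s]) (use K in \<open>auto simp: mult.assoc\<close>)
qed

lemma interleave_sums:
  fixes g h :: "nat \<Rightarrow> 'b::real_normed_vector"
  assumes "g sums G" "h sums H"
  shows "(\<lambda>n. if even n then g (n div 2) else h (n div 2)) sums (G + H)"
proof -
  define E where "E = (\<lambda>n. if even n then g (n div 2) else 0)"
  define Od where "Od = (\<lambda>n. if even n then 0 else h (n div 2))"
  have sm1: "strict_mono (\<lambda>k::nat. 2 * k)" by (auto simp: strict_mono_def)
  have sm2: "strict_mono (\<lambda>k::nat. 2 * k + 1)" by (auto simp: strict_mono_def)
  have "(\<lambda>k. E (2 * k)) sums G" using assms(1) by (simp add: E_def)
  hence e: "E sums G"
    by (subst (asm) sums_mono_reindex[OF sm1]) (auto simp: E_def elim!: evenE)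
  have "(\<lambda>k. Od (2 * k + 1)) sums H" using assms(2) by (simp add: Od_def)
  hence o: "Od sums H"
    apply (subst (asm) sums_mono_reindex[OF sm2])
     by (auto simp: Od_def elim!: oddE)
  have "(\<lambda>n. E n + Od n) sums (G + H)" by (rule sums_add[OF e o])
  moreover have "(\<lambda>n. E n + Od n) = (\<lambda>n. if even n then g (n div 2) else h (n div 2))"
    by (auto simp: E_def Od_def)
  ultimately show ?thesis by simp
qed

lemma tadd_apply: "tadd t s n = (if even n then t (n div 2) else s (n div 2))"
  by (simp add: tadd_def)

lemma trep_tadd: "trep t \<Longrightarrow> trep s \<Longrightarrow> trep (tadd t s)"
  unfolding trep_def
  using interleave_sums[OF summable_sums summable_sums, of "\<lambda>n. norm (fst (t n)) * norm (snd (t n))" "\<lambda>n. norm (fst (s n)) * norm (snd (s n))"]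
  by (auto simp: tadd_def sums_iff if_distrib cong: if_cong)

lemma tval_tadd: "trep t \<Longrightarrow> trep s \<Longrightarrow> tval (tadd t s) = tval t + tval s"
  unfolding trep_def tval_def
  using interleave_sums[OF summable_sums summable_sums, of "\<lambda>n. norm (fst (t n)) * norm (snd (t n))" "\<lambda>n. norm (fst (s n)) * norm (snd (s n))"]
  by (auto simp: tadd_def sums_iff if_distrib cong: if_cong)

lemma tev_tadd: "trep t \<Longrightarrow> trep s \<Longrightarrow> bounded_bilinear_form B \<Longrightarrow> tev B (tadd t s) = tev B t + tev B s"
  unfolding tev_def
  using interleave_sums[OF summable_sums[OF tev_summable] summable_sums[OF tev_summable], of t B s]
  by (auto simp: tadd_def sums_iff if_distrib cong: if_cong)

lemma trep_tscale: "trep t \<Longrightarrow> trep (tscale c t)"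
  unfolding trep_def tscale_def by (simp add: norm_scaleC mult.assoc summable_mult)

lemma tval_tscale: "trep t \<Longrightarrow> tval (tscale c t) = cmod c * tval t"
  unfolding tval_def tscale_def trep_def by (simp add: norm_scaleC mult.assoc suminf_mult)

lemma tev_tscale: "trep t \<Longrightarrow> bounded_bilinear_form B \<Longrightarrow> tev B (tscale c t) = c * tev B t"
  using tev_summable[of t B] unfolding tev_def tscale_def by (simp add: bbf_scale1 suminf_mult)

lemma trep_tdiff: "trep t \<Longrightarrow> trep s \<Longrightarrow> trep (tdiff t s)"
  unfolding tdiff_def by (simp add: trep_tadd trep_tscale)

lemma tev_tdiff: "trep t \<Longrightarrow> trep s \<Longrightarrow> bounded_bilinear_form B \<Longrightarrow> tev B (tdiff t s) = tev B t - tev B s"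
  unfolding tdiff_def by (simp add: tev_tadd trep_tscale tev_tscale)

lemma trep_tlact: "trep t \<Longrightarrow> trep (tlact a t)"
proof -
  assume "trep t"
  hence s: "summable (\<lambda>n. norm a * (norm (fst (t n)) * norm (snd (t n))))"
    by (simp add: trep_def summable_mult)
  show ?thesis unfolding trep_def tlact_def
    apply (rule summable_comparison_test[OF _ s])
    apply (auto intro!: mult_right_mono simp: norm_mult_ineq mult.assoc[symmetric])
    done
qed

lemma trep_tract: "trep t \<Longrightarrow> trep (tract t a)"
proof -
  assume "trep t"
  hence s: "summable (\<lambda>n. norm a * (norm (fst (t n)) * norm (snd (t n))))"
    by (simp add: trep_def summable_mult)
  have "norm (fst (t n)) * norm (snd (t n) * a) \<le> norm a * (norm (fst (t n)) * norm (snd (t n)))" for n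
    using mult_left_mono[OF norm_mult_ineq[of "snd (t n)" a], of "norm (fst (t n))"]
    by (simp add: algebra_simps)
  thus ?thesis unfolding trep_def tract_def
    by (intro summable_comparison_test[OF _ s]) auto
qed

lemma teq_refl: "teq t t" by (simp add: teq_def)
lemma teq_sym: "teq t s \<Longrightarrow> teq s t" by (simp add: teq_def)
lemma teq_trans: "teq t s \<Longrightarrow> teq s r \<Longrightarrow> teq t r" by (simp add: teq_def)



lemma pnorm_alt: "pnorm t = Inf {tval s | s. trep s \<and> teq s t}"
  by (simp add: pnorm_def tval_def)

lemma tval_nonneg: "trep t \<Longrightarrow> 0 \<le> tval t"
  unfolding tval_def trep_def by (rule suminf_nonneg) auto

lemma pnorm_le: "trep r \<Longrightarrow> teq r t \<Longrightarrow> pnorm t \<le> tval r"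
  unfolding pnorm_alt
  by (rule cInf_lower) (auto intro!: bdd_belowI[of _ 0] tval_nonneg)

lemma pnorm_le_self: "trep t \<Longrightarrow> pnorm t \<le> tval t"
  by (rule pnorm_le) (auto simp: teq_refl)

lemma pnorm_nonneg: "trep t \<Longrightarrow> 0 \<le> pnorm t"
  unfolding pnorm_alt
  by (rule cInf_greatest) (auto intro: teq_refl tval_nonneg)

lemma pnorm_teq: "teq t s \<Longrightarrow> pnorm t = pnorm s"
  unfolding pnorm_alt by (metis teq_sym teq_trans)

lemma pnorm_map_le:
  assumes "trep t" "0 \<le> C"
    and "\<And>r. trep r \<Longrightarrow> teq r t \<Longrightarrow> trep (N r) \<and> teq (N r) s \<and> tval (N r) \<le> C * tval r"
  shows "pnorm s \<le> C * pnorm t"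
proof (cases "C = 0")
  case True
  have "trep (N t) \<and> teq (N t) s \<and> tval (N t) \<le> 0" using assms(3)[OF assms(1) teq_refl] True by simp
  thus ?thesis using pnorm_le[of "N t" s] True by simp
next
  case False
  hence C: "C > 0" using assms(2) by simp
  have "pnorm s / C \<le> pnorm t"
    unfolding pnorm_alt[of t]
  proof (rule cInf_greatest)
    show "{tval r |r. trep r \<and> teq r t} \<noteq> {}" using assms(1) teq_refl by blast
  next
    fix x assume "x \<in> {tval r |r. trep r \<and> teq r t}"
    then obtain r where r: "x = tval r" "trep r" "teq r t" by blast
    have "pnorm s \<le> tval (N r)" using assms(3)[OF r(2,3)] pnorm_le by blast
    also have "\<dots> \<le> C * x" using assms(3)[OF r(2,3)] r(1) by simp
    finally show "pnorm s / C \<le> x" using C by (simp add: field_simps)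
  qed
  thus ?thesis using C by (simp add: field_simps)
qed

definition tzero :: "nat \<Rightarrow> 'a::complex_banach_algebra \<times> 'a" where "tzero = (\<lambda>n. (0, 0))"

lemma trep_tzero: "trep tzero" by (simp add: trep_def tzero_def)
lemma tval_tzero: "tval tzero = 0" by (simp add: tval_def tzero_def)
lemma tev_tzero: "bounded_bilinear_form B \<Longrightarrow> tev B tzero = 0" by (simp add: tev_def tzero_def bbf_zero1)

lemma pnorm_zero: fixes t :: "nat \<Rightarrow> 'a::complex_banach_algebra \<times> 'a" shows "(\<And>B. bounded_bilinear_form B \<Longrightarrow> tev B t = 0) \<Longrightarrow> trep t \<Longrightarrow> pnorm t = 0"
proof -
  assume h: "\<And>B. bounded_bilinear_form B \<Longrightarrow> tev B t = 0" and t: "trep t"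
  have "teq tzero t" using h by (simp add: teq_def tev_tzero)
  hence "pnorm t \<le> tval (tzero :: nat \<Rightarrow> 'a \<times> 'a)" using pnorm_le[OF trep_tzero, of t] by simp
  hence "pnorm t \<le> 0" by (simp add: tval_tzero)
  thus ?thesis using pnorm_nonneg[OF t] by simp
qed

lemma tpi_summable: "trep t \<Longrightarrow> summable (\<lambda>n. fst (t n) * snd (t n))"
  unfolding trep_def
  by (rule summable_norm_cancel, rule summable_comparison_test[of _ "\<lambda>n. norm (fst (t n)) * norm (snd (t n))"])
     (auto simp: norm_mult_ineq)

lemma tpi_tscale: "trep t \<Longrightarrow> tpi (tscale c t) = scaleC c (tpi t)"
  unfolding tpi_def tscale_def
  using bounded_linear.suminf[OF bounded_linear_scaleC tpi_summable, of t c]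
  by (simp add: mult_scaleC_left)

lemma tlact_tscale: "tlact a (tscale c t) = tscale c (tlact a t)"
  by (simp add: tlact_def tscale_def mult_scaleC_right)

lemma final_construction:
  fixes \<phi> :: "'a::complex_banach_algebra \<Rightarrow> complex"
    and G :: "(nat \<Rightarrow> 'a \<times> 'a) filter"
  assumes ch: "is_character \<phi>"
    and G: "G \<noteq> bot" "eventually trep G"
    and c1: "\<And>a. ((\<lambda>n. pnorm (tdiff (tlact a n) (tscale (\<phi> a) n))) \<longlongrightarrow> 0) G"
    and c2: "((\<lambda>n. \<phi> (tpi n)) \<longlongrightarrow> 1) G"
  shows "approx_left_phi_biprojective \<phi>"
proof -
  define R where "R = (\<lambda>(n::nat \<Rightarrow> 'a \<times> 'a) (x::'a). tscale (\<phi> x) n)"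
  define F where "F = filtermap R G"
  have "F \<noteq> bot" using G(1) by (simp add: F_def filtermap_bot_iff)
  moreover have "eventually bounded_linear_to_tensor F"
    unfolding F_def eventually_filtermap
    using G(2)
  proof (rule eventually_mono)
    fix n :: "nat \<Rightarrow> 'a \<times> 'a" assume tn: "trep n"
    show "bounded_linear_to_tensor (R n)"
      unfolding bounded_linear_to_tensor_def R_def
    proof (intro conjI allI)
      fix x show "trep (tscale (\<phi> x) n)" using tn by (rule trep_tscale)
    next
      fix x y show "teq (tscale (\<phi> (x + y)) n) (tadd (tscale (\<phi> x) n) (tscale (\<phi> y) n))"
        unfolding teq_def using tn
        by (simp add: tev_tadd tev_tscale trep_tscale char_add[OF ch] distrib_right)
    next
      fix c x show "teq (tscale (\<phi> (scaleC c x)) n) (tscale c (tscale (\<phi> x) n))"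
        unfolding teq_def using tn
        by (simp add: tev_tscale trep_tscale char_scaleC[OF ch])
    next
      show "\<exists>K. \<forall>x. pnorm (tscale (\<phi> x) n) \<le> K * norm x"
      proof (intro exI allI)
        fix x
        have "pnorm (tscale (\<phi> x) n) \<le> tval (tscale (\<phi> x) n)"
          by (rule pnorm_le_self[OF trep_tscale[OF tn]])
        also have "\<dots> = cmod (\<phi> x) * tval n" by (rule tval_tscale[OF tn])
        also have "\<dots> \<le> norm x * tval n"
          by (rule mult_right_mono[OF char_bound[OF ch] tval_nonneg[OF tn]])
        finally show "pnorm (tscale (\<phi> x) n) \<le> tval n * norm x" by (simp add: mult.commute)
      qed
    qed
  qed
  moreover have "((\<lambda>\<rho>. pnorm (tdiff (tlact a (\<rho> x)) (\<rho> (a * x)))) \<longlongrightarrow> 0) F" for a x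
  proof -
    have ev: "eventually (\<lambda>n. 0 \<le> pnorm (tdiff (tlact a (R n x)) (R n (a * x))) \<and>
         pnorm (tdiff (tlact a (R n x)) (R n (a * x))) \<le> cmod (\<phi> x) * pnorm (tdiff (tlact a n) (tscale (\<phi> a) n))) G"
      using G(2)
    proof (rule eventually_mono)
      fix n :: "nat \<Rightarrow> 'a \<times> 'a" assume tn: "trep n"
      let ?t = "tdiff (tlact a n) (tscale (\<phi> a) n)"
      let ?s = "tdiff (tlact a (R n x)) (R n (a * x))"
      have ts: "trep ?s" unfolding R_def by (intro trep_tdiff trep_tlact trep_tscale tn)
      have tt: "trep ?t" by (intro trep_tdiff trep_tlact trep_tscale tn)
      have "pnorm ?s \<le> cmod (\<phi> x) * pnorm ?t"
      proof (rule pnorm_map_le[where N="tscale (\<phi> x)"])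
        show "trep ?t" by fact
        show "0 \<le> cmod (\<phi> x)" by simp
      next
        fix r assume r: "trep r" "teq r ?t"
        show "trep (tscale (\<phi> x) r) \<and> teq (tscale (\<phi> x) r) ?s \<and> tval (tscale (\<phi> x) r) \<le> cmod (\<phi> x) * tval r"
        proof (intro conjI)
          show "trep (tscale (\<phi> x) r)" using r by (simp add: trep_tscale)
          show "tval (tscale (\<phi> x) r) \<le> cmod (\<phi> x) * tval r" using r by (simp add: tval_tscale)
          show "teq (tscale (\<phi> x) r) ?s"
            unfolding teq_def
          proof (intro allI impI)
            fix B :: "'a \<Rightarrow> 'a \<Rightarrow> complex" assume B: "bounded_bilinear_form B"
            have "tev B r = tev B ?t" using r(2) B unfolding teq_def by blast
            also have "\<dots> = tev B (tlact a n) - \<phi> a * tev B n" using B tn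
              by (simp add: tev_tdiff trep_tlact trep_tscale tev_tscale)
            finally have h: "tev B r = tev B (tlact a n) - \<phi> a * tev B n" .
            have t1: "trep (tlact a (tscale (\<phi> x) n))" using tn by (intro trep_tlact trep_tscale)
            have t2: "trep (tscale (\<phi> (a * x)) n)" using tn by (intro trep_tscale)
            have e1: "tev B ?s = tev B (tlact a (tscale (\<phi> x) n)) - tev B (tscale (\<phi> (a * x)) n)"
              unfolding R_def by (rule tev_tdiff[OF t1 t2 B])
            have e2: "tev B (tlact a (tscale (\<phi> x) n)) = \<phi> x * tev B (tlact a n)"
              unfolding tlact_tscale by (rule tev_tscale[OF trep_tlact[OF tn] B])
            have e3: "tev B (tscale (\<phi> (a * x)) n) = \<phi> a * \<phi> x * tev B n"
              unfolding tev_tscale[OF tn B] char_mult[OF ch] by (rule refl)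
            have "tev B ?s = \<phi> x * tev B (tlact a n) - \<phi> a * \<phi> x * tev B n"
              unfolding e1 e2 e3 by (rule refl)
            also have "\<dots> = \<phi> x * tev B r" unfolding h by (simp add: algebra_simps)
            also have "\<dots> = tev B (tscale (\<phi> x) r)" using B r(1) by (simp add: tev_tscale)
            finally show "tev B (tscale (\<phi> x) r) = tev B ?s" by (rule sym)
          qed
        qed
      qed
      thus "0 \<le> pnorm ?s \<and> pnorm ?s \<le> cmod (\<phi> x) * pnorm ?t" by (rule conjI[OF pnorm_nonneg[OF ts]])
    qed
    have L: "((\<lambda>n. cmod (\<phi> x) * pnorm (tdiff (tlact a n) (tscale (\<phi> a) n))) \<longlongrightarrow> cmod (\<phi> x) * 0) G"
      by (intro tendsto_mult tendsto_const c1)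
    have "((\<lambda>n. pnorm (tdiff (tlact a (R n x)) (R n (a * x)))) \<longlongrightarrow> 0) G"
    proof (rule tendsto_sandwich[of "\<lambda>_. 0" _ G "\<lambda>n. cmod (\<phi> x) * pnorm (tdiff (tlact a n) (tscale (\<phi> a) n))"])
      show "eventually (\<lambda>n. 0 \<le> pnorm (tdiff (tlact a (R n x)) (R n (a * x)))) G"
        using ev by (rule eventually_mono) (rule conjunct1)
      show "eventually (\<lambda>n. pnorm (tdiff (tlact a (R n x)) (R n (a * x))) \<le> cmod (\<phi> x) * pnorm (tdiff (tlact a n) (tscale (\<phi> a) n))) G"
        using ev by (rule eventually_mono) (rule conjunct2)
      show "((\<lambda>_. 0::real) \<longlongrightarrow> 0) G" by simp
      show "((\<lambda>n. cmod (\<phi> x) * pnorm (tdiff (tlact a n) (tscale (\<phi> a) n))) \<longlongrightarrow> 0) G"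
        using L by simp
    qed
    thus ?thesis unfolding F_def filterlim_filtermap o_def .
  qed
  moreover have "((\<lambda>\<rho>. pnorm (tdiff (\<rho> (x * a)) (tscale (\<phi> a) (\<rho> x)))) \<longlongrightarrow> 0) F" for a x
  proof -
    have "eventually (\<lambda>n. pnorm (tdiff (R n (x * a)) (tscale (\<phi> a) (R n x))) = 0) G"
      using G(2)
    proof (rule eventually_mono)
      fix n :: "nat \<Rightarrow> 'a \<times> 'a" assume tn: "trep n"
      show "pnorm (tdiff (R n (x * a)) (tscale (\<phi> a) (R n x))) = 0"
        unfolding R_def
        by (rule pnorm_zero) (use tn in \<open>simp_all add: tev_tdiff tev_tscale trep_tscale trep_tdiff char_mult[OF ch]\<close>)
    qed
    hence "((\<lambda>n. pnorm (tdiff (R n (x * a)) (tscale (\<phi> a) (R n x)))) \<longlongrightarrow> 0) G"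
      by (rule tendsto_eventually)
    thus ?thesis by (simp add: F_def filterlim_filtermap o_def)
  qed
  moreover have "((\<lambda>\<rho>. \<phi> (tpi (\<rho> x)) - \<phi> x) \<longlongrightarrow> 0) F" for x
  proof -
    have e: "eventually (\<lambda>n. \<phi> x * \<phi> (tpi n) - \<phi> x = \<phi> (tpi (R n x)) - \<phi> x) G"
      using G(2) by (rule eventually_mono) (simp add: R_def tpi_tscale char_scaleC[OF ch])
    have "((\<lambda>n. \<phi> x * \<phi> (tpi n) - \<phi> x) \<longlongrightarrow> \<phi> x * 1 - \<phi> x) G"
      by (intro tendsto_intros c2)
    hence "((\<lambda>n. \<phi> (tpi (R n x)) - \<phi> x) \<longlongrightarrow> 0) G"
      using tendsto_cong[OF e] by simp
    thus ?thesis by (simp add: F_def filterlim_filtermap o_def)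
  qed
  ultimately show ?thesis unfolding approx_left_phi_biprojective_def by blast
qed

definition Nmap :: "('a::complex_banach_algebra \<Rightarrow> complex) \<Rightarrow> 'a \<Rightarrow> (nat \<Rightarrow> 'a \<times> 'a) \<Rightarrow> (nat \<Rightarrow> 'a \<times> 'a)" where
  "Nmap \<phi> w r = (\<lambda>k. (scaleC (\<phi> (snd (r k))) (fst (r k)), w))"

definition Bw :: "('a::complex_banach_algebra \<Rightarrow> complex) \<Rightarrow> 'a \<Rightarrow> ('a \<Rightarrow> 'a \<Rightarrow> complex) \<Rightarrow> ('a \<Rightarrow> 'a \<Rightarrow> complex)" where
  "Bw \<phi> w B = (\<lambda>p q. \<phi> q * B p w)"

lemma bbf_Bw:
  assumes ch: "is_character \<phi>" and B: "bounded_bilinear_form B"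
  shows "bounded_bilinear_form (Bw \<phi> w B)"
proof -
  obtain K where K: "\<And>a b. cmod (B a b) \<le> K * norm a * norm b" using bbf_bound[OF B] by blast
  have bd: "cmod (\<phi> q * B p w) \<le> (\<bar>K\<bar> * norm w) * norm p * norm q" for p q
  proof -
    have "cmod (\<phi> q * B p w) = cmod (\<phi> q) * cmod (B p w)" by (simp add: norm_mult)
    also have "\<dots> \<le> norm q * (\<bar>K\<bar> * norm p * norm w)"
    proof (rule mult_mono)
      show "cmod (\<phi> q) \<le> norm q" by (rule char_bound[OF ch])
      show "cmod (B p w) \<le> \<bar>K\<bar> * norm p * norm w"
        using K[of p w] by (smt (verit) mult_right_mono norm_ge_zero zero_le_mult_iff)
    qed auto
    finally show ?thesis by (simp add: algebra_simps)
  qed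
  have ex: "\<exists>K'. \<forall>p q. cmod (\<phi> q * B p w) \<le> K' * norm p * norm q"
    using bd by blast
  show ?thesis
    unfolding bounded_bilinear_form_def Bw_def
    using B ex by (auto simp: bbf_add1 bbf_scale1 char_add[OF ch] char_scaleC[OF ch] algebra_simps)
qed

lemma trep_Nmap:
  assumes ch: "is_character \<phi>" and t: "trep r"
  shows "trep (Nmap \<phi> w r)" and "tval (Nmap \<phi> w r) \<le> norm w * tval r"
proof -
  have s: "summable (\<lambda>n. norm w * (norm (fst (r n)) * norm (snd (r n))))"
    using t by (simp add: trep_def summable_mult)
  have le: "norm (scaleC (\<phi> (snd (r n))) (fst (r n))) * norm w \<le> norm w * (norm (fst (r n)) * norm (snd (r n)))" for n
    using mult_right_mono[OF char_bound[OF ch, of "snd (r n)"] norm_ge_zero[of "fst (r n)"]]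
    by (simp add: norm_scaleC algebra_simps mult_left_mono)
  show tN: "trep (Nmap \<phi> w r)" unfolding trep_def Nmap_def
    by (rule summable_comparison_test[OF _ s]) (use le in auto)
  show "tval (Nmap \<phi> w r) \<le> norm w * tval r"
    unfolding tval_def
    apply (subst suminf_mult[symmetric])
     apply (use t in \<open>simp add: trep_def\<close>)
    apply (rule suminf_le)
      apply (use le in \<open>simp add: Nmap_def\<close>)
     apply (use tN in \<open>simp add: trep_def\<close>)
    by (rule s)
qed

lemma tev_Nmap: "bounded_bilinear_form B \<Longrightarrow> tev B (Nmap \<phi> w r) = tev (Bw \<phi> w B) r"
  unfolding tev_def Nmap_def Bw_def by (simp add: bbf_scale1)

lemma tev_Nmap_tlact: "bounded_bilinear_form B \<Longrightarrow> tev B (tlact a (Nmap \<phi> w r)) = tev (Bw \<phi> w B) (tlact a r)"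
  unfolding tev_def Nmap_def Bw_def tlact_def by (simp add: bbf_scale1 mult_scaleC_right)

lemma tev_Bw_tract:
  assumes ch: "is_character \<phi>" and B: "bounded_bilinear_form B" and t: "trep r"
  shows "tev (Bw \<phi> w B) (tract r a) = \<phi> a * tev (Bw \<phi> w B) r"
proof -
  have "tev (Bw \<phi> w B) (tract r a) = (\<Sum>n. \<phi> a * Bw \<phi> w B (fst (r n)) (snd (r n)))"
    unfolding tev_def tract_def Bw_def by (simp add: char_mult[OF ch] algebra_simps)
  also have "\<dots> = \<phi> a * tev (Bw \<phi> w B) r"
    unfolding tev_def by (rule suminf_mult[OF tev_summable[OF t bbf_Bw[OF ch B]]])
  finally show ?thesis .
qed

lemma pnorm_Nmap:
  assumes ch: "is_character \<phi>" and tm: "trep m"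
  shows "pnorm (tdiff (tlact a (Nmap \<phi> w m)) (tscale (\<phi> a) (Nmap \<phi> w m)))
         \<le> norm w * pnorm (tdiff (tlact a m) (tract m a))"
proof (rule pnorm_map_le[where N="Nmap \<phi> w"])
  show "trep (tdiff (tlact a m) (tract m a))" by (intro trep_tdiff trep_tlact trep_tract tm)
  show "0 \<le> norm w" by simp
next
  fix r assume r: "trep r" "teq r (tdiff (tlact a m) (tract m a))"
  have tNm: "trep (Nmap \<phi> w m)" by (rule trep_Nmap(1)[OF ch tm])
  show "trep (Nmap \<phi> w r) \<and> teq (Nmap \<phi> w r) (tdiff (tlact a (Nmap \<phi> w m)) (tscale (\<phi> a) (Nmap \<phi> w m)))
        \<and> tval (Nmap \<phi> w r) \<le> norm w * tval r"
  proof (intro conjI)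
    show "trep (Nmap \<phi> w r)" by (rule trep_Nmap(1)[OF ch r(1)])
    show "tval (Nmap \<phi> w r) \<le> norm w * tval r" by (rule trep_Nmap(2)[OF ch r(1)])
    show "teq (Nmap \<phi> w r) (tdiff (tlact a (Nmap \<phi> w m)) (tscale (\<phi> a) (Nmap \<phi> w m)))"
      unfolding teq_def
    proof (intro allI impI)
      fix B :: "'a \<Rightarrow> 'a \<Rightarrow> complex" assume B: "bounded_bilinear_form B"
      have B': "bounded_bilinear_form (Bw \<phi> w B)" by (rule bbf_Bw[OF ch B])
      have "tev B (Nmap \<phi> w r) = tev (Bw \<phi> w B) r" by (rule tev_Nmap[OF B])
      also have "\<dots> = tev (Bw \<phi> w B) (tdiff (tlact a m) (tract m a))"
        using r(2) B' unfolding teq_def by blast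
      also have "\<dots> = tev (Bw \<phi> w B) (tlact a m) - tev (Bw \<phi> w B) (tract m a)"
        by (rule tev_tdiff[OF trep_tlact[OF tm] trep_tract[OF tm] B'])
      also have "\<dots> = tev B (tlact a (Nmap \<phi> w m)) - \<phi> a * tev B (Nmap \<phi> w m)"
        unfolding tev_Nmap_tlact[OF B] tev_Nmap[OF B] tev_Bw_tract[OF ch B tm] ..
      also have "\<dots> = tev B (tdiff (tlact a (Nmap \<phi> w m)) (tscale (\<phi> a) (Nmap \<phi> w m)))"
        unfolding tev_tdiff[OF trep_tlact[OF tNm] trep_tscale[OF tNm] B] tev_tscale[OF tNm B] ..
      finally show "tev B (Nmap \<phi> w r) = tev B (tdiff (tlact a (Nmap \<phi> w m)) (tscale (\<phi> a) (Nmap \<phi> w m)))" .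
    qed
  qed
qed

lemma char_suminf:
  assumes ch: "is_character \<phi>" and s: "summable f"
  shows "\<phi> (suminf f) = (\<Sum>n. \<phi> (f n))"
  using bounded_linear.suminf[OF char_bounded_linear[OF ch] s] by simp

lemma tpi_Nmap:
  assumes ch: "is_character \<phi>" and tm: "trep m" and w: "\<phi> w = 1"
  shows "\<phi> (tpi (Nmap \<phi> w m)) = \<phi> (tpi m)"
proof -
  have "\<phi> (tpi (Nmap \<phi> w m)) = (\<Sum>n. \<phi> (fst (Nmap \<phi> w m n) * snd (Nmap \<phi> w m n)))"
    unfolding tpi_def by (rule char_suminf[OF ch tpi_summable[OF trep_Nmap(1)[OF ch tm]]])
  also have "\<dots> = (\<Sum>n. \<phi> (fst (m n) * snd (m n)))"
    by (simp add: Nmap_def char_mult[OF ch] char_scaleC[OF ch] w mult.commute)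
  also have "\<dots> = \<phi> (tpi m)"
    unfolding tpi_def by (rule char_suminf[OF ch tpi_summable[OF tm], symmetric])
  finally show ?thesis .
qed

lemma branch_pseudo:
  fixes \<phi> :: "'a::complex_banach_algebra \<Rightarrow> complex"
  assumes ch: "is_character \<phi>" and pa: "pseudo_amenable TYPE('a)"
  shows "approx_left_phi_biprojective \<phi>"
proof -
  obtain F :: "(nat \<Rightarrow> 'a \<times> 'a) filter" where F: "F \<noteq> bot" "eventually trep F"
    and c1: "\<And>a. ((\<lambda>m. pnorm (tdiff (tlact a m) (tract m a))) \<longlongrightarrow> 0) F"
    and c2: "\<And>a. ((\<lambda>m. tpi m * a) \<longlongrightarrow> a) F"
    using pa unfolding pseudo_amenable_def by blast
  obtain w where w: "\<phi> w = 1" using char_unit[OF ch] by blast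
  obtain a0 where a0: "\<phi> a0 \<noteq> 0" using ch unfolding is_character_def by blast
  define G where "G = filtermap (Nmap \<phi> w) F"
  show ?thesis
  proof (rule final_construction[OF ch, of G])
    show "G \<noteq> bot" using F(1) by (simp add: G_def filtermap_bot_iff)
    show "eventually trep G" unfolding G_def eventually_filtermap
      using F(2) by (rule eventually_mono) (rule trep_Nmap(1)[OF ch])
  next
    fix a
    have ev: "eventually (\<lambda>m. 0 \<le> pnorm (tdiff (tlact a (Nmap \<phi> w m)) (tscale (\<phi> a) (Nmap \<phi> w m))) \<and>
       pnorm (tdiff (tlact a (Nmap \<phi> w m)) (tscale (\<phi> a) (Nmap \<phi> w m))) \<le> norm w * pnorm (tdiff (tlact a m) (tract m a))) F"
      using F(2)
    proof (rule eventually_mono)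
      fix m :: "nat \<Rightarrow> 'a \<times> 'a" assume tm: "trep m"
      have tN: "trep (Nmap \<phi> w m)" by (rule trep_Nmap(1)[OF ch tm])
      show "0 \<le> pnorm (tdiff (tlact a (Nmap \<phi> w m)) (tscale (\<phi> a) (Nmap \<phi> w m))) \<and>
       pnorm (tdiff (tlact a (Nmap \<phi> w m)) (tscale (\<phi> a) (Nmap \<phi> w m))) \<le> norm w * pnorm (tdiff (tlact a m) (tract m a))"
        by (rule conjI[OF pnorm_nonneg[OF trep_tdiff[OF trep_tlact[OF tN] trep_tscale[OF tN]]] pnorm_Nmap[OF ch tm]])
    qed
    have L: "((\<lambda>m. norm w * pnorm (tdiff (tlact a m) (tract m a))) \<longlongrightarrow> norm w * 0) F"
      by (intro tendsto_mult tendsto_const c1)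
    have "((\<lambda>m. pnorm (tdiff (tlact a (Nmap \<phi> w m)) (tscale (\<phi> a) (Nmap \<phi> w m)))) \<longlongrightarrow> 0) F"
    proof (rule tendsto_sandwich[of "\<lambda>_. 0" _ F "\<lambda>m. norm w * pnorm (tdiff (tlact a m) (tract m a))"])
      show "eventually (\<lambda>m. 0 \<le> pnorm (tdiff (tlact a (Nmap \<phi> w m)) (tscale (\<phi> a) (Nmap \<phi> w m)))) F"
        using ev by (rule eventually_mono) (rule conjunct1)
      show "eventually (\<lambda>m. pnorm (tdiff (tlact a (Nmap \<phi> w m)) (tscale (\<phi> a) (Nmap \<phi> w m))) \<le> norm w * pnorm (tdiff (tlact a m) (tract m a))) F"
        using ev by (rule eventually_mono) (rule conjunct2)
      show "((\<lambda>_. 0::real) \<longlongrightarrow> 0) F" by (rule tendsto_const)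
      show "((\<lambda>m. norm w * pnorm (tdiff (tlact a m) (tract m a))) \<longlongrightarrow> 0) F" using L by simp
    qed
    thus "((\<lambda>n. pnorm (tdiff (tlact a n) (tscale (\<phi> a) n))) \<longlongrightarrow> 0) G"
      unfolding G_def filterlim_filtermap o_def .
  next
    have "((\<lambda>m. \<phi> (tpi m * a0)) \<longlongrightarrow> \<phi> a0) F"
      by (rule bounded_linear.tendsto[OF char_bounded_linear[OF ch] c2])
    hence "((\<lambda>m. \<phi> (tpi m) * \<phi> a0 / \<phi> a0) \<longlongrightarrow> \<phi> a0 / \<phi> a0) F"
      by (intro tendsto_divide tendsto_const) (simp_all add: char_mult[OF ch] a0)
    hence l: "((\<lambda>m. \<phi> (tpi m)) \<longlongrightarrow> 1) F" using a0 by simp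
    have e: "eventually (\<lambda>m. \<phi> (tpi m) = \<phi> (tpi (Nmap \<phi> w m))) F"
      using F(2) by (rule eventually_mono) (simp add: tpi_Nmap[OF ch _ w])
    have "((\<lambda>m. \<phi> (tpi (Nmap \<phi> w m))) \<longlongrightarrow> 1) F"
      using tendsto_cong[OF e] l by simp
    thus "((\<lambda>n. \<phi> (tpi n)) \<longlongrightarrow> 1) G"
      unfolding G_def filterlim_filtermap o_def .
  qed
qed

section \<open>Hahn--Banach (dominated extension)\<close>

definition good_graph :: "('v::real_vector \<Rightarrow> real) \<Rightarrow> ('v \<Rightarrow> real) \<Rightarrow> 'v set \<Rightarrow> ('v \<times> real) set \<Rightarrow> bool" where
  "good_graph p f S G \<longleftrightarrow>
     (\<forall>x a b. (x, a) \<in> G \<longrightarrow> (x, b) \<in> G \<longrightarrow> a = b) \<and>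
     (\<forall>x a y b. (x, a) \<in> G \<longrightarrow> (y, b) \<in> G \<longrightarrow> (x + y, a + b) \<in> G) \<and>
     (\<forall>x a c. (x, a) \<in> G \<longrightarrow> (c *\<^sub>R x, c * a) \<in> G) \<and>
     (\<forall>x a. (x, a) \<in> G \<longrightarrow> a \<le> p x) \<and>
     (\<forall>x\<in>S. (x, f x) \<in> G)"

lemma good_graph_zero:
  assumes "good_graph p f S G" "(x, a) \<in> G"
  shows "(0, 0) \<in> G"
  using assms unfolding good_graph_def by (metis mult_zero_left scaleR_zero_left)

lemma good_graph_diff:
  assumes "good_graph p f S G" "(x, a) \<in> G" "(y, b) \<in> G"
  shows "(y - x, b - a) \<in> G"
proof -
  have "((-1) *\<^sub>R x, (-1) * a) \<in> G" using assms unfolding good_graph_def by blast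
  hence "(y + (-1) *\<^sub>R x, b + (-1) * a) \<in> G" using assms unfolding good_graph_def by blast
  thus ?thesis by simp
qed

lemma hb_step:
  fixes p :: "'v::real_vector \<Rightarrow> real"
  assumes p_add: "\<And>x y. p (x + y) \<le> p x + p y"
    and p_hom: "\<And>c x. 0 \<le> c \<Longrightarrow> p (c *\<^sub>R x) = c * p x"
    and G: "good_graph p f S G" and G0: "(0, 0) \<in> G"
    and x0: "x0 \<notin> fst ` G"
  shows "\<exists>G'. good_graph p f S G' \<and> G \<subseteq> G' \<and> x0 \<in> fst ` G'"
proof -
  have Gsv: "\<And>x a b. (x, a) \<in> G \<Longrightarrow> (x, b) \<in> G \<Longrightarrow> a = b"
    and Gadd: "\<And>x a y b. (x, a) \<in> G \<Longrightarrow> (y, b) \<in> G \<Longrightarrow> (x + y, a + b) \<in> G"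
    and Gsc: "\<And>x a c. (x, a) \<in> G \<Longrightarrow> (c *\<^sub>R x, c * a) \<in> G"
    and Gp: "\<And>x a. (x, a) \<in> G \<Longrightarrow> a \<le> p x"
    and GS: "\<And>x. x \<in> S \<Longrightarrow> (x, f x) \<in> G"
    using G unfolding good_graph_def by blast+
  define L where "L = {b - p (y - x0) | y b. (y, b) \<in> G}"
  define c where "c = Sup L"
  have key: "b - p (y - x0) \<le> p (x + x0) - a" if "(x, a) \<in> G" "(y, b) \<in> G" for x a y b
  proof -
    have "a + b \<le> p (x + y)" using Gp[OF Gadd[OF that]] .
    also have "x + y = (x + x0) + (y - x0)" by simp
    also have "p \<dots> \<le> p (x + x0) + p (y - x0)" by (rule p_add)
    finally show ?thesis by simp
  qed
  have Lne: "L \<noteq> {}" using G0 unfolding L_def by blast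
  have Lbdd: "bdd_above L" unfolding L_def bdd_above_def using key[OF G0] by blast
  have c_ge: "b - p (y - x0) \<le> c" if "(y, b) \<in> G" for y b
    unfolding c_def by (rule cSup_upper[OF _ Lbdd]) (use that in \<open>auto simp: L_def\<close>)
  have c_le: "c \<le> p (x + x0) - a" if "(x, a) \<in> G" for x a
    unfolding c_def by (rule cSup_least[OF Lne]) (use key[OF that] in \<open>auto simp: L_def\<close>)
  define G' where "G' = {(x + t *\<^sub>R x0, a + t * c) | x a t. (x, a) \<in> G}"
  have bound: "a + t * c \<le> p (x + t *\<^sub>R x0)" if xa: "(x, a) \<in> G" for x a t
  proof (cases "t = 0")
    case True then show ?thesis using Gp[OF xa] by simp
  next
    case False
    show ?thesis
    proof (cases "t > 0")
      case True
      have m: "((1/t) *\<^sub>R x, (1/t) * a) \<in> G" by (rule Gsc[OF xa])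
      have "c \<le> p ((1/t) *\<^sub>R x + x0) - (1/t) * a" by (rule c_le[OF m])
      hence "t * c \<le> t * p ((1/t) *\<^sub>R x + x0) - a" using True
        by (simp add: field_simps mult_le_cancel_left_pos)
      also have "t * p ((1/t) *\<^sub>R x + x0) = p (t *\<^sub>R ((1/t) *\<^sub>R x + x0))"
        using p_hom[of t] True by simp
      also have "t *\<^sub>R ((1/t) *\<^sub>R x + x0) = x + t *\<^sub>R x0" using True by (simp add: scaleR_add_right)
      finally show ?thesis by simp
    next
      case False
      hence s: "-t > 0" using \<open>t \<noteq> 0\<close> by simp
      define s' where "s' = -t"
      have s'p: "s' > 0" using s by (simp add: s'_def)
      have m: "((1/s') *\<^sub>R x, (1/s') * a) \<in> G" by (rule Gsc[OF xa])
      have "(1/s') * a - p ((1/s') *\<^sub>R x - x0) \<le> c" by (rule c_ge[OF m])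
      hence "a - s' * p ((1/s') *\<^sub>R x - x0) \<le> s' * c" using s'p
        by (simp add: field_simps mult_le_cancel_left_pos)
      also have "s' * p ((1/s') *\<^sub>R x - x0) = p (s' *\<^sub>R ((1/s') *\<^sub>R x - x0))"
        using p_hom[of s'] s'p by simp
      also have "s' *\<^sub>R ((1/s') *\<^sub>R x - x0) = x + t *\<^sub>R x0" using s'p by (simp add: s'_def scaleR_diff_right)
      finally show ?thesis by (simp add: s'_def)
    qed
  qed
  have "good_graph p f S G'"
    unfolding good_graph_def
  proof (intro conjI allI impI ballI)
    fix z a' b' assume "(z, a') \<in> G'" "(z, b') \<in> G'"
    then obtain x a t y b s where xa: "(x, a) \<in> G" "z = x + t *\<^sub>R x0" "a' = a + t * c"
      and yb: "(y, b) \<in> G" "z = y + s *\<^sub>R x0" "b' = b + s * c"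
      unfolding G'_def by blast
    have ts: "t = s"
    proof (rule ccontr)
      assume "t \<noteq> s"
      have "(y - x, b - a) \<in> G" by (rule good_graph_diff[OF G xa(1) yb(1)])
      hence "((1/(t - s)) *\<^sub>R (y - x), (1/(t - s)) * (b - a)) \<in> G" by (rule Gsc)
      moreover have "(1/(t - s)) *\<^sub>R (y - x) = x0"
      proof -
        have "y - x = (t - s) *\<^sub>R x0" using xa(2) yb(2) by (simp add: algebra_simps)
        thus ?thesis using \<open>t \<noteq> s\<close> by simp
      qed
      ultimately have "x0 \<in> fst ` G" by force
      thus False using x0 by simp
    qed
    hence "x = y" using xa(2) yb(2) by simp
    hence "a = b" using Gsv xa(1) yb(1) by blast
    thus "a' = b'" using xa(3) yb(3) ts by simp
  next
    fix z a' w b' assume "(z, a') \<in> G'" "(w, b') \<in> G'"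
    then obtain x a t y b s where xa: "(x, a) \<in> G" "z = x + t *\<^sub>R x0" "a' = a + t * c"
      and yb: "(y, b) \<in> G" "w = y + s *\<^sub>R x0" "b' = b + s * c"
      unfolding G'_def by blast
    have "(x + y, a + b) \<in> G" by (rule Gadd[OF xa(1) yb(1)])
    moreover have "z + w = (x + y) + (t + s) *\<^sub>R x0" "a' + b' = (a + b) + (t + s) * c"
      using xa yb by (simp_all add: algebra_simps)
    ultimately show "(z + w, a' + b') \<in> G'" unfolding G'_def by blast
  next
    fix z a' r assume "(z, a') \<in> G'"
    then obtain x a t where xa: "(x, a) \<in> G" "z = x + t *\<^sub>R x0" "a' = a + t * c"
      unfolding G'_def by blast
    have "(r *\<^sub>R x, r * a) \<in> G" by (rule Gsc[OF xa(1)])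
    moreover have "r *\<^sub>R z = r *\<^sub>R x + (r * t) *\<^sub>R x0" "r * a' = r * a + (r * t) * c"
      using xa by (simp_all add: algebra_simps)
    ultimately show "(r *\<^sub>R z, r * a') \<in> G'" unfolding G'_def by blast
  next
    fix z a' assume "(z, a') \<in> G'"
    then obtain x a t where xa: "(x, a) \<in> G" "z = x + t *\<^sub>R x0" "a' = a + t * c"
      unfolding G'_def by blast
    show "a' \<le> p z" using bound[OF xa(1), of t] xa by simp
  next
    fix x assume "x \<in> S"
    hence "(x, f x) \<in> G" by (rule GS)
    hence "(x + 0 *\<^sub>R x0, f x + 0 * c) \<in> G'" unfolding G'_def by blast
    thus "(x, f x) \<in> G'" by simp
  qed
  moreover have "G \<subseteq> G'"
  proof
    fix q assume "q \<in> G"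
    then obtain x a where q: "q = (x, a)" "(x, a) \<in> G" by (cases q) auto
    hence "(x + 0 *\<^sub>R x0, a + 0 * c) \<in> G'" unfolding G'_def by blast
    thus "q \<in> G'" using q by simp
  qed
  moreover have "(0 + 1 *\<^sub>R x0, 0 + 1 * c) \<in> G'" unfolding G'_def using G0 by blast
  hence "x0 \<in> fst ` G'" by force
  ultimately show ?thesis by blast
qed

theorem hahn_banach:
  fixes p :: "'v::real_vector \<Rightarrow> real" and f :: "'v \<Rightarrow> real"
  assumes p_add: "\<And>x y. p (x + y) \<le> p x + p y"
    and p_hom: "\<And>c x. 0 \<le> c \<Longrightarrow> p (c *\<^sub>R x) = c * p x"
    and S0: "0 \<in> S"
    and Sadd: "\<And>x y. x \<in> S \<Longrightarrow> y \<in> S \<Longrightarrow> x + y \<in> S"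
    and Ssc: "\<And>c x. x \<in> S \<Longrightarrow> c *\<^sub>R x \<in> S"
    and fadd: "\<And>x y. x \<in> S \<Longrightarrow> y \<in> S \<Longrightarrow> f (x + y) = f x + f y"
    and fsc: "\<And>c x. x \<in> S \<Longrightarrow> f (c *\<^sub>R x) = c * f x"
    and fp: "\<And>x. x \<in> S \<Longrightarrow> f x \<le> p x"
  shows "\<exists>g. linear g \<and> (\<forall>x. g x \<le> p x) \<and> (\<forall>x\<in>S. g x = f x)"
proof -
  define A where "A = {G. good_graph p f S G}"
  define G0 where "G0 = {(x, f x) | x. x \<in> S}"
  have G0m: "(x, a) \<in> G0 \<longleftrightarrow> x \<in> S \<and> a = f x" for x a unfolding G0_def by blast
  have "good_graph p f S G0"
    unfolding good_graph_def
  proof (intro conjI allI impI ballI)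
    fix x a b assume "(x, a) \<in> G0" "(x, b) \<in> G0"
    thus "a = b" by (simp add: G0m)
  next
    fix x a y b assume h: "(x, a) \<in> G0" "(y, b) \<in> G0"
    hence "x \<in> S" "y \<in> S" "a = f x" "b = f y" by (simp_all add: G0m)
    thus "(x + y, a + b) \<in> G0" using Sadd fadd by (simp add: G0m)
  next
    fix x a c assume h: "(x, a) \<in> G0"
    hence "x \<in> S" "a = f x" by (simp_all add: G0m)
    thus "(c *\<^sub>R x, c * a) \<in> G0" using Ssc fsc by (simp add: G0m)
  next
    fix x a assume h: "(x, a) \<in> G0"
    hence "x \<in> S" "a = f x" by (simp_all add: G0m)
    thus "a \<le> p x" using fp by simp
  next
    fix x assume "x \<in> S" thus "(x, f x) \<in> G0" by (simp add: G0m)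
  qed
  hence G0A: "G0 \<in> A" by (simp add: A_def)
  have "\<forall>C\<in>chains A. \<exists>U\<in>A. \<forall>X\<in>C. X \<subseteq> U"
  proof
    fix C assume C: "C \<in> chains A"
    show "\<exists>U\<in>A. \<forall>X\<in>C. X \<subseteq> U"
    proof (cases "C = {}")
      case True then show ?thesis using G0A by blast
    next
      case False
      have CA: "C \<subseteq> A" using chainsD2[OF C] .
      have two: "\<exists>X\<in>C. q1 \<in> X \<and> q2 \<in> X" if qq: "q1 \<in> \<Union>C" "q2 \<in> \<Union>C" for q1 q2
      proof -
        obtain X1 X2 where "X1 \<in> C" "X2 \<in> C" "q1 \<in> X1" "q2 \<in> X2" using qq by blast
        thus ?thesis using chainsD[OF C, of X1 X2] by blast
      qed
      have "good_graph p f S (\<Union>C)"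
        unfolding good_graph_def
      proof (intro conjI allI impI ballI)
        fix x a b assume "(x, a) \<in> \<Union>C" "(x, b) \<in> \<Union>C"
        then obtain X where "X \<in> C" "(x, a) \<in> X" "(x, b) \<in> X" using two by blast
        thus "a = b" using CA unfolding A_def good_graph_def by blast
      next
        fix x a y b assume "(x, a) \<in> \<Union>C" "(y, b) \<in> \<Union>C"
        then obtain X where "X \<in> C" "(x, a) \<in> X" "(y, b) \<in> X" using two by blast
        thus "(x + y, a + b) \<in> \<Union>C" using CA unfolding A_def good_graph_def by blast
      next
        fix x a c assume "(x, a) \<in> \<Union>C"
        then obtain X where "X \<in> C" "(x, a) \<in> X" by blast
        thus "(c *\<^sub>R x, c * a) \<in> \<Union>C" using CA unfolding A_def good_graph_def by blast
      next
        fix x a assume "(x, a) \<in> \<Union>C"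
        then obtain X where "X \<in> C" "(x, a) \<in> X" by blast
        thus "a \<le> p x" using CA unfolding A_def good_graph_def by blast
      next
        fix x assume "x \<in> S"
        obtain X where "X \<in> C" using False by blast
        thus "(x, f x) \<in> \<Union>C" using CA \<open>x \<in> S\<close> unfolding A_def good_graph_def by blast
      qed
      thus ?thesis unfolding A_def by blast
    qed
  qed
  from Zorn_Lemma2[OF this] obtain M where MA: "M \<in> A" and Mmax0: "\<forall>X\<in>A. M \<subseteq> X \<longrightarrow> X = M"
    by (elim bexE)
  have Mmax: "\<And>X. X \<in> A \<Longrightarrow> M \<subseteq> X \<Longrightarrow> X = M" using Mmax0 by blast
  have M: "good_graph p f S M" using MA by (simp add: A_def)
  have Msv: "\<And>x a b. (x, a) \<in> M \<Longrightarrow> (x, b) \<in> M \<Longrightarrow> a = b"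
    and Madd: "\<And>x a y b. (x, a) \<in> M \<Longrightarrow> (y, b) \<in> M \<Longrightarrow> (x + y, a + b) \<in> M"
    and Msc: "\<And>x a c. (x, a) \<in> M \<Longrightarrow> (c *\<^sub>R x, c * a) \<in> M"
    and Mp: "\<And>x a. (x, a) \<in> M \<Longrightarrow> a \<le> p x"
    and MS: "\<And>x. x \<in> S \<Longrightarrow> (x, f x) \<in> M"
    using M unfolding good_graph_def by blast+
  have M0: "(0, 0) \<in> M"
  proof -
    have "(0, f 0) \<in> M" using MS S0 by blast
    thus ?thesis by (rule good_graph_zero[OF M])
  qed
  have dom: "\<And>x. x \<in> fst ` M"
  proof (rule ccontr)
    fix x assume "x \<notin> fst ` M"
    then obtain G' where G': "good_graph p f S G'" "M \<subseteq> G'" "x \<in> fst ` G'"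
      using hb_step[OF p_add p_hom M M0] by blast
    hence "G' = M" using Mmax unfolding A_def by blast
    thus False using G'(3) \<open>x \<notin> fst ` M\<close> by simp
  qed
  define g where "g x = (THE a. (x, a) \<in> M)" for x
  have gM: "(x, g x) \<in> M" for x
  proof -
    obtain a where a: "(x, a) \<in> M" using dom[of x] by force
    have "(THE a. (x, a) \<in> M) = a"
      by (rule the_equality[where P="\<lambda>a. (x, a) \<in> M", OF a]) (use Msv a in blast)
    thus ?thesis using a by (simp add: g_def)
  qed
  have gu: "g x = a" if "(x, a) \<in> M" for x a
    using Msv gM[of x] that by blast
  have "linear g"
  proof (rule linearI)
    fix x y show "g (x + y) = g x + g y"
      by (rule gu, rule Madd[OF gM gM])
  next
    fix r x show "g (r *\<^sub>R x) = r *\<^sub>R g x"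
      unfolding real_scaleR_def by (rule gu, rule Msc[OF gM])
  qed
  moreover have "\<forall>x. g x \<le> p x" using Mp gM by blast
  moreover have "\<forall>x\<in>S. g x = f x" using MS gu by blast
  ultimately show ?thesis by blast
qed

lemma hb_separate:
  fixes p :: "'v::real_vector \<Rightarrow> real"
  assumes p_add: "\<And>x y. p (x + y) \<le> p x + p y"
    and p_hom: "\<And>c x. 0 \<le> c \<Longrightarrow> p (c *\<^sub>R x) = c * p x"
    and p_nn: "\<And>x. 0 \<le> p x"
    and M0: "0 \<in> M" and Madd: "\<And>x y. x \<in> M \<Longrightarrow> y \<in> M \<Longrightarrow> x + y \<in> M"
    and Msc: "\<And>c x. x \<in> M \<Longrightarrow> c *\<^sub>R x \<in> M"
    and far: "\<And>m. m \<in> M \<Longrightarrow> \<epsilon> \<le> p (y + m)" and eps: "0 < \<epsilon>"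
  shows "\<exists>g. linear g \<and> (\<forall>x. g x \<le> p x) \<and> (\<forall>m\<in>M. g m = 0) \<and> g y = \<epsilon>"
proof -
  have p0: "p 0 = 0" using p_hom[of 0 0] by simp
  have uniq: "t = t'" if "m \<in> M" "m' \<in> M" "m + t *\<^sub>R y = m' + t' *\<^sub>R y" for m m' t t'
  proof (rule ccontr)
    assume ne: "t \<noteq> t'"
    have "(t - t') *\<^sub>R y = m' - m" using that(3) by (simp add: algebra_simps)
    hence "(1 / (t - t')) *\<^sub>R ((t - t') *\<^sub>R y) = (1 / (t - t')) *\<^sub>R (m' - m)" by simp
    hence "y = (1 / (t - t')) *\<^sub>R (m' - m)" using ne by simp
    moreover have "m' - m \<in> M" using Madd[OF that(2) Msc[OF that(1), of "-1"]] by simp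
    ultimately have yM: "y \<in> M" using Msc by simp
    have "(-1) *\<^sub>R y \<in> M" by (rule Msc[OF yM])
    hence "\<epsilon> \<le> p (y + (-1) *\<^sub>R y)" by (rule far)
    thus False using p0 eps by simp
  qed
  define S where "S = {m + t *\<^sub>R y | m t. m \<in> M}"
  define f where "f z = \<epsilon> * (THE t. \<exists>m\<in>M. z = m + t *\<^sub>R y)" for z
  have fval: "f (m + t *\<^sub>R y) = \<epsilon> * t" if "m \<in> M" for m t
  proof -
    have "(THE t'. \<exists>m'\<in>M. m + t *\<^sub>R y = m' + t' *\<^sub>R y) = t"
      by (rule the_equality) (use that uniq in \<open>auto\<close>)
    thus ?thesis by (simp add: f_def)
  qed
  have Sm: "z \<in> S \<longleftrightarrow> (\<exists>m t. m \<in> M \<and> z = m + t *\<^sub>R y)" for z unfolding S_def by blast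
  have "\<exists>g. linear g \<and> (\<forall>x. g x \<le> p x) \<and> (\<forall>x\<in>S. g x = f x)"
  proof (rule hahn_banach[OF p_add p_hom])
    show "0 \<in> S" using M0 Sm[of 0] by (metis add.right_neutral scaleR_zero_left)
  next
    fix x z assume "x \<in> S" "z \<in> S"
    then obtain m t m' t' where h: "m \<in> M" "x = m + t *\<^sub>R y" "m' \<in> M" "z = m' + t' *\<^sub>R y" using Sm by blast
    have e: "x + z = (m + m') + (t + t') *\<^sub>R y" using h by (simp add: algebra_simps)
    show "x + z \<in> S" using Sm e Madd[OF h(1,3)] by blast
    have "f (x + z) = \<epsilon> * (t + t')" unfolding e by (rule fval[OF Madd[OF h(1,3)]])
    moreover have "f x = \<epsilon> * t" "f z = \<epsilon> * t'" using fval h by simp_all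
    ultimately show "f (x + z) = f x + f z" by (simp add: algebra_simps)
  next
    fix c x assume "x \<in> S"
    then obtain m t where h: "m \<in> M" "x = m + t *\<^sub>R y" using Sm by blast
    have e: "c *\<^sub>R x = c *\<^sub>R m + (c * t) *\<^sub>R y" using h by (simp add: algebra_simps)
    show "c *\<^sub>R x \<in> S" using Sm e Msc[OF h(1)] by blast
    have "f (c *\<^sub>R x) = \<epsilon> * (c * t)" unfolding e by (rule fval[OF Msc[OF h(1)]])
    moreover have "f x = \<epsilon> * t" using fval h by simp
    ultimately show "f (c *\<^sub>R x) = c * f x" by (simp add: algebra_simps)
  next
    fix x assume "x \<in> S"
    then obtain m t where h: "m \<in> M" "x = m + t *\<^sub>R y" using Sm by blast
    show "f x \<le> p x"
    proof (cases "t > 0")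
      case True
      have mt: "(1/t) *\<^sub>R m \<in> M" by (rule Msc[OF h(1)])
      have "\<epsilon> \<le> p (y + (1/t) *\<^sub>R m)" by (rule far[OF mt])
      hence "t * \<epsilon> \<le> t * p (y + (1/t) *\<^sub>R m)" using True by simp
      also have "\<dots> = p (t *\<^sub>R (y + (1/t) *\<^sub>R m))" using p_hom[of t] True by simp
      also have "t *\<^sub>R (y + (1/t) *\<^sub>R m) = x" using True h(2) by (simp add: scaleR_add_right algebra_simps)
      finally show ?thesis using fval[OF h(1)] h(2) by (simp add: mult.commute)
    next
      case False
      hence "\<epsilon> * t \<le> 0" using eps by (simp add: mult_nonneg_nonpos)
      thus ?thesis using fval[OF h(1)] h(2) p_nn[of x] by simp
    qed
  qed
  then obtain g where g: "linear g" "\<forall>x. g x \<le> p x" "\<forall>x\<in>S. g x = f x" by blast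
  have "\<forall>m\<in>M. g m = 0"
  proof
    fix m assume m: "m \<in> M"
    have "m + 0 *\<^sub>R y \<in> S" using Sm m by blast
    hence "g (m + 0 *\<^sub>R y) = \<epsilon> * 0" using g(3) fval[OF m, of 0] by simp
    thus "g m = 0" by simp
  qed
  moreover have "g y = \<epsilon>"
  proof -
    have "0 + 1 *\<^sub>R y \<in> S" using Sm M0 by blast
    hence "g (0 + 1 *\<^sub>R y) = \<epsilon> * 1" using g(3) fval[OF M0, of 1] by simp
    thus ?thesis by simp
  qed
  ultimately show ?thesis using g(1,2) by blast
qed

instantiation "fun" :: (type, real_vector) real_vector
begin
definition scaleR_fun :: "real \<Rightarrow> ('a \<Rightarrow> 'b) \<Rightarrow> 'a \<Rightarrow> 'b" where
  "scaleR_fun c f = (\<lambda>x. c *\<^sub>R f x)"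
instance by standard (auto simp: scaleR_fun_def fun_eq_iff algebra_simps)
end

lemma scaleR_fun_apply [simp]: "(c *\<^sub>R f) x = c *\<^sub>R f x"
  by (simp add: scaleR_fun_def)

lemma sum_fun_apply: "(\<Sum>j\<in>A. f j) x = (\<Sum>j\<in>A. f j x)"
  by (induction A rule: infinite_finite_induct) auto

definition Xs :: "('a::complex_banach_algebra \<Rightarrow> complex) \<Rightarrow> ('a \<Rightarrow> complex) set" where
  "Xs \<phi> = {f. (\<forall>k. \<phi> k \<noteq> 0 \<longrightarrow> f k = 0) \<and>
     (\<forall>k l. \<phi> k = 0 \<longrightarrow> \<phi> l = 0 \<longrightarrow> f (k + l) = f k + f l) \<and>
     (\<forall>c k. \<phi> k = 0 \<longrightarrow> f (scaleC c k) = c * f k) \<and>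
     (\<exists>K. \<forall>k. \<phi> k = 0 \<longrightarrow> cmod (f k) \<le> K * norm k)}"

definition opnorm :: "('a::complex_banach_algebra \<Rightarrow> complex) \<Rightarrow> ('a \<Rightarrow> complex) \<Rightarrow> real" where
  "opnorm \<phi> f = Sup {cmod (f k) | k. \<phi> k = 0 \<and> norm k \<le> 1}"

lemma XsI:
  assumes "\<And>k. \<phi> k \<noteq> 0 \<Longrightarrow> f k = 0"
    "\<And>k l. \<phi> k = 0 \<Longrightarrow> \<phi> l = 0 \<Longrightarrow> f (k + l) = f k + f l"
    "\<And>c k. \<phi> k = 0 \<Longrightarrow> f (scaleC c k) = c * f k"
    "\<And>k. \<phi> k = 0 \<Longrightarrow> cmod (f k) \<le> K * norm k"
  shows "f \<in> Xs \<phi>"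
  using assms unfolding Xs_def by blast

lemma XsD:
  assumes "f \<in> Xs \<phi>"
  shows "\<And>k. \<phi> k \<noteq> 0 \<Longrightarrow> f k = 0"
    "\<And>k l. \<phi> k = 0 \<Longrightarrow> \<phi> l = 0 \<Longrightarrow> f (k + l) = f k + f l"
    "\<And>c k. \<phi> k = 0 \<Longrightarrow> f (scaleC c k) = c * f k"
    "\<exists>K. \<forall>k. \<phi> k = 0 \<longrightarrow> cmod (f k) \<le> K * norm k"
  using assms unfolding Xs_def by blast+

lemma Xs_zero: "f \<in> Xs \<phi> \<Longrightarrow> is_character \<phi> \<Longrightarrow> f 0 = 0"
  using XsD(2)[of f \<phi> 0 0] char_zero[of \<phi>] by simp

lemma opnorm_bdd:
  assumes "f \<in> Xs \<phi>"
  shows "bdd_above {cmod (f k) | k. \<phi> k = 0 \<and> norm k \<le> 1}"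
proof -
  obtain K where K: "\<And>k. \<phi> k = 0 \<Longrightarrow> cmod (f k) \<le> K * norm k" using XsD(4)[OF assms] by blast
  have "cmod (f k) \<le> max K 0" if "\<phi> k = 0" "norm k \<le> 1" for k
  proof -
    have "cmod (f k) \<le> K * norm k" by (rule K[OF that(1)])
    also have "\<dots> \<le> max K 0 * norm k" by (rule mult_right_mono) auto
    also have "\<dots> \<le> max K 0 * 1" by (rule mult_left_mono[OF that(2)]) auto
    finally show ?thesis by simp
  qed
  thus ?thesis unfolding bdd_above_def by blast
qed

lemma opnorm_upper:
  assumes "f \<in> Xs \<phi>" "\<phi> k = 0" "norm k \<le> 1"
  shows "cmod (f k) \<le> opnorm \<phi> f"
  unfolding opnorm_def by (rule cSup_upper[OF _ opnorm_bdd[OF assms(1)]]) (use assms in blast)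

lemma opnorm_le:
  assumes ch: "is_character \<phi>" and "\<And>k. \<phi> k = 0 \<Longrightarrow> norm k \<le> 1 \<Longrightarrow> cmod (f k) \<le> B"
  shows "opnorm \<phi> f \<le> B"
  unfolding opnorm_def
  by (rule cSup_least) (use assms char_zero[OF ch] in \<open>fastforce+\<close>)

lemma opnorm_nonneg:
  assumes ch: "is_character \<phi>" and f: "f \<in> Xs \<phi>"
  shows "0 \<le> opnorm \<phi> f"
  using opnorm_upper[OF f char_zero[OF ch]] norm_ge_zero[of "f 0"] by (simp del: norm_ge_zero)

lemma opnorm_bound:
  assumes ch: "is_character \<phi>" and f: "f \<in> Xs \<phi>" and k: "\<phi> k = 0"
  shows "cmod (f k) \<le> opnorm \<phi> f * norm k"
proof (cases "k = 0")
  case True then show ?thesis using Xs_zero[OF f ch] by simp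
next
  case False
  define k' where "k' = scaleC (of_real (1 / norm k)) k"
  have nk: "norm k' = 1" using False by (simp add: k'_def norm_scaleC norm_divide)
  have pk: "\<phi> k' = 0" using k by (simp add: k'_def char_scaleC[OF ch])
  have "f k' = of_real (1 / norm k) * f k" unfolding k'_def by (rule XsD(3)[OF f k])
  hence "cmod (f k') = cmod (f k) / norm k" by (simp add: norm_mult norm_divide)
  moreover have "cmod (f k') \<le> opnorm \<phi> f" by (rule opnorm_upper[OF f pk]) (simp add: nk)
  ultimately have "norm k * cmod (f k') = cmod (f k)" "cmod (f k') \<le> opnorm \<phi> f" using False by (simp_all add: field_simps)
  thus ?thesis by (metis mult.commute mult_left_mono norm_ge_zero)
qed

definition ej :: "nat \<Rightarrow> 'a::zero \<Rightarrow> nat \<Rightarrow> 'a" where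
  "ej j k = (\<lambda>i. if i = j then k else 0)"

lemma ej_add: "ej j (k + l) = ej j k + ej j (l::'a::comm_monoid_add)"
  by (auto simp: ej_def fun_eq_iff)
lemma ej_scaleR: "ej j (c *\<^sub>R k) = c *\<^sub>R ej j (k::'a::real_vector)"
  by (auto simp: ej_def fun_eq_iff)
lemma ej_diff: "ej j (k - l) = ej j k - ej j (l::'a::ab_group_add)"
  by (auto simp: ej_def fun_eq_iff)
lemma ej_minus: "ej j (- k) = - ej j (k::'a::ab_group_add)"
  by (auto simp: ej_def fun_eq_iff)

lemma sum_ej: "(\<Sum>j<n. ej j (x j)) = (\<lambda>i. if i < n then x i else (0::'a::comm_monoid_add))"
  by (auto simp: fun_eq_iff sum_fun_apply ej_def)

lemma scaleC_decomp: "scaleC c k = Re c *\<^sub>R k + Im c *\<^sub>R scaleC \<i> (k::'a::complex_banach_algebra)"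
proof -
  have "scaleC c k = scaleC (complex_of_real (Re c) + complex_of_real (Im c) * \<i>) k"
    by (simp add: complex_eq[symmetric] mult.commute)
  also have "\<dots> = Re c *\<^sub>R k + Im c *\<^sub>R scaleC \<i> k"
    by (simp add: scaleC_add_left scaleC_scaleC[symmetric] scaleC_of_real)
  finally show ?thesis .
qed

lemma sep_functionals:
  fixes \<phi> :: "'a::complex_banach_algebra \<Rightarrow> complex" and as :: "nat \<Rightarrow> 'a"
  assumes ch: "is_character \<phi>" and u: "\<phi> u = 1" and eps: "0 < \<epsilon>"
    and far: "\<And>v. \<phi> v = 1 \<Longrightarrow> \<epsilon> \<le> (\<Sum>j<n. norm (as j * v - scaleC (\<phi> (as j)) v))"
  shows "\<exists>f. (\<forall>j<n. f j \<in> Xs \<phi> \<and> opnorm \<phi> (f j) \<le> 1) \<and>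
             (\<forall>k. \<phi> k = 0 \<longrightarrow> (\<Sum>j<n. f j (as j * k - scaleC (\<phi> (as j)) k)) = 0) \<and>
             Re (\<Sum>j<n. f j (as j * u - scaleC (\<phi> (as j)) u)) = \<epsilon> / 2"
proof -
  define p :: "(nat \<Rightarrow> 'a) \<Rightarrow> real" where "p w = (\<Sum>j<n. norm (w j))" for w
  define Tk :: "'a \<Rightarrow> nat \<Rightarrow> 'a" where "Tk k = (\<lambda>j. if j < n then as j * k - scaleC (\<phi> (as j)) k else 0)" for k
  define MM where "MM = {Tk k | k. \<phi> k = 0}"
  have p_add: "p (x + y) \<le> p x + p y" for x y
    unfolding p_def by (simp add: sum.distrib[symmetric] sum_mono norm_triangle_ineq)
  have p_hom: "p (c *\<^sub>R x) = c * p x" if "0 \<le> c" for c x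
    unfolding p_def using that by (simp add: sum_distrib_left)
  have p_nn: "0 \<le> p x" for x unfolding p_def by (simp add: sum_nonneg)
  have Tk_add: "Tk (k + l) = Tk k + Tk l" for k l
    by (auto simp: Tk_def fun_eq_iff distrib_left scaleC_add_right algebra_simps)
  have Tk_sc: "Tk (c *\<^sub>R k) = c *\<^sub>R Tk k" for c k
    by (auto simp: Tk_def fun_eq_iff scaleC_scaleR_comm scaleR_diff_right)
  have Tk0: "Tk 0 = 0" by (auto simp: Tk_def fun_eq_iff scaleC_zero_right)
  have M0: "0 \<in> MM" unfolding MM_def using Tk0 char_zero[OF ch] by force
  have Madd: "x + y \<in> MM" if xy: "x \<in> MM" "y \<in> MM" for x y
  proof -
    obtain k l where "x = Tk k" "\<phi> k = 0" "y = Tk l" "\<phi> l = 0" using xy unfolding MM_def by blast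
    hence "x + y = Tk (k + l)" "\<phi> (k + l) = 0" by (simp_all add: Tk_add char_add[OF ch])
    thus ?thesis unfolding MM_def by blast
  qed
  have Msc: "c *\<^sub>R x \<in> MM" if xm: "x \<in> MM" for c x
  proof -
    obtain k where "x = Tk k" "\<phi> k = 0" using xm unfolding MM_def by blast
    hence "c *\<^sub>R x = Tk (c *\<^sub>R k)" "\<phi> (c *\<^sub>R k) = 0" by (simp_all add: Tk_sc char_scaleR[OF ch])
    thus ?thesis unfolding MM_def by blast
  qed
  have pTk: "p (Tk v) = (\<Sum>j<n. norm (as j * v - scaleC (\<phi> (as j)) v))" for v
    unfolding p_def Tk_def by simp
  have far': "\<epsilon> \<le> p (Tk u + m)" if mm: "m \<in> MM" for m
  proof -
    obtain k where k: "m = Tk k" "\<phi> k = 0" using mm unfolding MM_def by blast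
    have "Tk u + m = Tk (u + k)" by (simp add: k Tk_add)
    moreover have "\<phi> (u + k) = 1" using u k by (simp add: char_add[OF ch])
    ultimately show ?thesis using far pTk by simp
  qed
  obtain g where g: "linear g" "\<And>x. g x \<le> p x" "\<And>m. m \<in> MM \<Longrightarrow> g m = 0" "g (Tk u) = \<epsilon>"
    using hb_separate[where p=p and M=MM and y="Tk u" and \<epsilon>=\<epsilon>, OF p_add p_hom p_nn M0 Madd Msc far' eps] by blast
  have gadd: "g (x + y) = g x + g y" for x y using g(1) by (simp add: linear_add)
  have gsc: "g (c *\<^sub>R x) = c * g x" for c x using g(1) linear_scale[OF g(1)] by simp
  have gdiff: "g (x - y) = g x - g y" for x y using g(1) by (simp add: linear_diff)
  have gsum: "g (\<Sum>j<n. x j) = (\<Sum>j<n. g (x j))" for x using g(1) by (simp add: linear_sum)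
  have pej: "p (ej j k) = norm k" if "j < n" for j k
  proof -
    have "p (ej j k) = (\<Sum>i<n. if i = j then norm k else 0)"
      unfolding p_def ej_def by (rule sum.cong) auto
    also have "\<dots> = norm k" using that by simp
    finally show ?thesis .
  qed
  have gej: "\<bar>g (ej j k)\<bar> \<le> norm k" if "j < n" for j k
  proof -
    have "g (ej j k) \<le> norm k" using g(2)[of "ej j k"] pej[OF that] by simp
    moreover have "g (ej j (-k)) \<le> norm k" using g(2)[of "ej j (-k)"] pej[OF that, of "-k"] by simp
    moreover have "g (ej j (-k)) = - g (ej j k)"
      using gsc[of "-1" "ej j k"] by (simp add: ej_minus)
    ultimately show ?thesis by linarith
  qed
  define f where "f j k = (if \<phi> k = 0 then (complex_of_real (g (ej j k)) - \<i> * complex_of_real (g (ej j (scaleC \<i> k)))) / 2 else 0)" for j k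
  have fk: "f j k = (complex_of_real (g (ej j k)) - \<i> * complex_of_real (g (ej j (scaleC \<i> k)))) / 2" if "\<phi> k = 0" for j k
    using that by (simp add: f_def)
  have ker_i: "\<phi> (scaleC \<i> k) = 0" if "\<phi> k = 0" for k using that by (simp add: char_scaleC[OF ch])
  have fXs: "f j \<in> Xs \<phi> \<and> opnorm \<phi> (f j) \<le> 1" if j: "j < n" for j
  proof -
    have bnd: "cmod (f j k) \<le> 1 * norm k" if k: "\<phi> k = 0" for k
    proof -
      have "cmod (f j k) \<le> (\<bar>g (ej j k)\<bar> + \<bar>g (ej j (scaleC \<i> k))\<bar>) / 2"
      proof -
        have "cmod (complex_of_real (g (ej j k)) - \<i> * complex_of_real (g (ej j (scaleC \<i> k))))
              \<le> cmod (complex_of_real (g (ej j k))) + cmod (\<i> * complex_of_real (g (ej j (scaleC \<i> k))))"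
          by (rule norm_triangle_ineq4)
        thus ?thesis using k by (simp add: fk norm_mult norm_divide)
      qed
      also have "\<dots> \<le> (norm k + norm (scaleC \<i> k)) / 2" using gej[OF j] by (simp add: add_mono divide_right_mono)
      also have "\<dots> = 1 * norm k" by (simp add: norm_scaleC)
      finally show ?thesis .
    qed
    have fX: "f j \<in> Xs \<phi>"
    proof (rule XsI[where K=1])
      fix k assume "\<phi> k \<noteq> 0" thus "f j k = 0" by (simp add: f_def)
    next
      fix k l assume k: "\<phi> k = 0" and l: "\<phi> l = 0"
      hence kl: "\<phi> (k + l) = 0" by (simp add: char_add[OF ch])
      show "f j (k + l) = f j k + f j l"
        unfolding fk[OF kl] fk[OF k] fk[OF l] by (simp add: scaleC_add_right ej_add gadd field_simps)
    next
      fix c k assume k: "\<phi> k = 0"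
      hence ck: "\<phi> (scaleC c k) = 0" by (simp add: char_scaleC[OF ch])
      have e1: "g (ej j (scaleC c k)) = Re c * g (ej j k) + Im c * g (ej j (scaleC \<i> k))"
        by (subst scaleC_decomp) (simp add: ej_add ej_scaleR gadd gsc)
      have e2: "g (ej j (scaleC \<i> (scaleC c k))) = - Im c * g (ej j k) + Re c * g (ej j (scaleC \<i> k))"
      proof -
        have "scaleC \<i> (scaleC c k) = scaleC c (scaleC \<i> k)" by (simp add: scaleC_scaleC mult.commute)
        also have "\<dots> = Re c *\<^sub>R scaleC \<i> k + Im c *\<^sub>R scaleC \<i> (scaleC \<i> k)" by (rule scaleC_decomp)
        also have "scaleC \<i> (scaleC \<i> k) = (-1) *\<^sub>R k" by (simp add: scaleC_scaleC scaleC_of_real[symmetric])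
        finally have "scaleC \<i> (scaleC c k) = Re c *\<^sub>R scaleC \<i> k + (- Im c) *\<^sub>R k" by simp
        thus ?thesis by (simp add: ej_add ej_diff ej_scaleR gadd gdiff gsc)
      qed
      show "f j (scaleC c k) = c * f j k"
        unfolding fk[OF ck] fk[OF k] e1 e2 by (simp add: complex_eq_iff algebra_simps)
    next
      fix k assume "\<phi> k = 0" thus "cmod (f j k) \<le> 1 * norm k" by (rule bnd)
    qed
    have "opnorm \<phi> (f j) \<le> 1"
    proof (rule opnorm_le[OF ch])
      fix k assume "\<phi> k = 0" "norm k \<le> (1::real)"
      thus "cmod (f j k) \<le> 1" using bnd by fastforce
    qed
    thus ?thesis using fX by simp
  qed
  have inker: "\<phi> (as j * v - scaleC (\<phi> (as j)) v) = 0" if "\<phi> v = 0 \<or> \<phi> v = 1" for j v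
    using that by (auto simp: char_diff[OF ch] char_mult[OF ch] char_scaleC[OF ch])
  have sumT: "(\<Sum>j<n. ej j (as j * v - scaleC (\<phi> (as j)) v)) = Tk v" for v
    unfolding sum_ej Tk_def by simp
  have sumf: "(\<Sum>j<n. f j (as j * v - scaleC (\<phi> (as j)) v)) =
      (complex_of_real (g (Tk v)) - \<i> * complex_of_real (g (Tk (scaleC \<i> v)))) / 2"
    if v: "\<phi> v = 0 \<or> \<phi> v = 1" for v
  proof -
    have a: "scaleC \<i> (as j * v - scaleC (\<phi> (as j)) v) = as j * scaleC \<i> v - scaleC (\<phi> (as j)) (scaleC \<i> v)" for j
      by (simp add: scaleC_diff_right mult_scaleC_right scaleC_scaleC mult.commute)
    have "(\<Sum>j<n. f j (as j * v - scaleC (\<phi> (as j)) v)) =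
       (\<Sum>j<n. (complex_of_real (g (ej j (as j * v - scaleC (\<phi> (as j)) v))) - \<i> * complex_of_real (g (ej j (as j * scaleC \<i> v - scaleC (\<phi> (as j)) (scaleC \<i> v))))) / 2)"
      by (rule sum.cong[OF refl]) (simp add: fk inker[OF v] a)
    also have "\<dots> = (complex_of_real (\<Sum>j<n. g (ej j (as j * v - scaleC (\<phi> (as j)) v))) - \<i> * complex_of_real (\<Sum>j<n. g (ej j (as j * scaleC \<i> v - scaleC (\<phi> (as j)) (scaleC \<i> v))))) / 2"
      by (simp add: sum_divide_distrib[symmetric] sum_subtractf sum_distrib_left)
    also have "\<dots> = (complex_of_real (g (Tk v)) - \<i> * complex_of_real (g (Tk (scaleC \<i> v)))) / 2"
      by (simp add: gsum[symmetric] sumT)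
    finally show ?thesis .
  qed
  show ?thesis
  proof (intro exI[of _ f] conjI allI impI)
    fix j assume "j < n" thus "f j \<in> Xs \<phi>" "opnorm \<phi> (f j) \<le> 1" using fXs by blast+
  next
    fix k assume k: "\<phi> k = 0"
    have "g (Tk k) = 0" using g(3) k unfolding MM_def by blast
    moreover have "g (Tk (scaleC \<i> k)) = 0" using g(3) ker_i[OF k] unfolding MM_def by blast
    ultimately show "(\<Sum>j<n. f j (as j * k - scaleC (\<phi> (as j)) k)) = 0" using sumf[of k] k by simp
  next
    show "Re (\<Sum>j<n. f j (as j * u - scaleC (\<phi> (as j)) u)) = \<epsilon> / 2"
    proof -
      have "(\<Sum>j<n. f j (as j * u - scaleC (\<phi> (as j)) u)) = (complex_of_real \<epsilon> - \<i> * complex_of_real (g (Tk (scaleC \<i> u)))) / 2"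
        using sumf[of u] u g(4) by simp
      hence "Re (\<Sum>j<n. f j (as j * u - scaleC (\<phi> (as j)) u)) = Re ((complex_of_real \<epsilon> - \<i> * complex_of_real (g (Tk (scaleC \<i> u)))) / 2)"
        by (simp only:)
      thus ?thesis by simp
    qed
  qed
qed

definition enc :: "('a \<Rightarrow> complex) \<Rightarrow> (('a \<Rightarrow> complex) \<Rightarrow> complex)" where
  "enc f = (\<lambda>g. if g = f then 1 else 0)"

definition dec :: "(('a \<Rightarrow> complex) \<Rightarrow> complex) \<Rightarrow> ('a \<Rightarrow> complex)" where
  "dec X = (SOME f. X = enc f)"

lemma enc_inj[simp]: "enc f = enc g \<longleftrightarrow> f = g"
  unfolding enc_def by (metis one_neq_zero)

lemma dec_enc[simp]: "dec (enc f) = f"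
  unfolding dec_def by (rule some_equality) auto

lemma Xs_zero_fun: "is_character \<phi> \<Longrightarrow> (\<lambda>_. 0) \<in> Xs \<phi>"
  by (rule XsI[where K=0]) auto

lemma Xs_add:
  assumes "f \<in> Xs \<phi>" "g \<in> Xs \<phi>"
  shows "(\<lambda>k. f k + g k) \<in> Xs \<phi>"
proof -
  obtain K1 where K1: "\<forall>k. \<phi> k = 0 \<longrightarrow> cmod (f k) \<le> K1 * norm k" using XsD(4)[OF assms(1)] by blast
  obtain K2 where K2: "\<forall>k. \<phi> k = 0 \<longrightarrow> cmod (g k) \<le> K2 * norm k" using XsD(4)[OF assms(2)] by blast
  show ?thesis
  proof (rule XsI[where K="K1 + K2"])
    fix k assume k: "\<phi> k = 0"
    have "cmod (f k + g k) \<le> cmod (f k) + cmod (g k)" by (rule norm_triangle_ineq)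
    also have "\<dots> \<le> (K1 + K2) * norm k" using K1 K2 k by (simp add: distrib_right add_mono)
    finally show "cmod (f k + g k) \<le> (K1 + K2) * norm k" .
  qed (use XsD[OF assms(1)] XsD[OF assms(2)] in \<open>auto simp: algebra_simps\<close>)
qed

lemma Xs_scale:
  assumes "f \<in> Xs \<phi>"
  shows "(\<lambda>k. c * f k) \<in> Xs \<phi>"
proof -
  obtain K where K: "\<forall>k. \<phi> k = 0 \<longrightarrow> cmod (f k) \<le> K * norm k" using XsD(4)[OF assms(1)] by blast
  show ?thesis
  proof (rule XsI[where K="cmod c * K"])
    fix k assume k: "\<phi> k = 0"
    show "cmod (c * f k) \<le> cmod c * K * norm k" using K k
      by (simp add: norm_mult mult.assoc mult_left_mono)
  qed (use XsD[OF assms(1)] in \<open>auto simp: algebra_simps\<close>)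
qed

lemma Xs_ract:
  assumes ch: "is_character \<phi>" and f: "f \<in> Xs \<phi>"
  shows "(\<lambda>k. if \<phi> k = 0 then f (a * k) else 0) \<in> Xs \<phi>"
proof (rule XsI[where K="opnorm \<phi> f * norm a"])
  fix k assume k: "\<phi> k = 0"
  have ak: "\<phi> (a * k) = 0" using k by (simp add: char_mult[OF ch])
  have "cmod (f (a * k)) \<le> opnorm \<phi> f * norm (a * k)" by (rule opnorm_bound[OF ch f ak])
  also have "\<dots> \<le> opnorm \<phi> f * (norm a * norm k)"
    by (rule mult_left_mono[OF norm_mult_ineq opnorm_nonneg[OF ch f]])
  finally show "cmod (if \<phi> k = 0 then f (a * k) else 0) \<le> opnorm \<phi> f * norm a * norm k"
    using k by (simp add: mult.assoc)
next
  fix k l assume k: "\<phi> k = 0" and l: "\<phi> l = 0"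
  thus "(if \<phi> (k + l) = 0 then f (a * (k + l)) else 0) = (if \<phi> k = 0 then f (a * k) else 0) + (if \<phi> l = 0 then f (a * l) else 0)"
    using XsD(2)[OF f, of "a * k" "a * l"] by (simp add: char_add[OF ch] char_mult[OF ch] distrib_left)
next
  fix c k assume k: "\<phi> k = 0"
  thus "(if \<phi> (scaleC c k) = 0 then f (a * scaleC c k) else 0) = c * (if \<phi> k = 0 then f (a * k) else 0)"
    using XsD(3)[OF f, of "a * k" c] by (simp add: char_scaleC[OF ch] char_mult[OF ch] mult_scaleC_right)
qed simp

lemma opnorm_add:
  assumes ch: "is_character \<phi>" and f: "f \<in> Xs \<phi>" and g: "g \<in> Xs \<phi>"
  shows "opnorm \<phi> (\<lambda>k. f k + g k) \<le> opnorm \<phi> f + opnorm \<phi> g"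
proof (rule opnorm_le[OF ch])
  fix k assume k: "\<phi> k = 0" "norm k \<le> 1"
  have "cmod (f k + g k) \<le> cmod (f k) + cmod (g k)" by (rule norm_triangle_ineq)
  also have "\<dots> \<le> opnorm \<phi> f + opnorm \<phi> g" using opnorm_upper[OF f k] opnorm_upper[OF g k] by simp
  finally show "cmod (f k + g k) \<le> opnorm \<phi> f + opnorm \<phi> g" .
qed

lemma opnorm_scale_le:
  assumes ch: "is_character \<phi>" and f: "f \<in> Xs \<phi>"
  shows "opnorm \<phi> (\<lambda>k. c * f k) \<le> cmod c * opnorm \<phi> f"
proof (rule opnorm_le[OF ch])
  fix k assume k: "\<phi> k = 0" "norm k \<le> 1"
  show "cmod (c * f k) \<le> cmod c * opnorm \<phi> f"
    using opnorm_upper[OF f k] by (simp add: norm_mult mult_left_mono)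
qed

lemma opnorm_scale:
  assumes ch: "is_character \<phi>" and f: "f \<in> Xs \<phi>"
  shows "opnorm \<phi> (\<lambda>k. c * f k) = cmod c * opnorm \<phi> f"
proof (cases "c = 0")
  case True
  have "opnorm \<phi> (\<lambda>k. c * f k) \<le> 0" using opnorm_scale_le[OF ch f, of c] True by simp
  moreover have "0 \<le> opnorm \<phi> (\<lambda>k. c * f k)" by (rule opnorm_nonneg[OF ch Xs_scale[OF f]])
  ultimately show ?thesis using True by simp
next
  case False
  have "opnorm \<phi> f = opnorm \<phi> (\<lambda>k. (1/c) * (c * f k))" using False by simp
  also have "\<dots> \<le> cmod (1/c) * opnorm \<phi> (\<lambda>k. c * f k)" by (rule opnorm_scale_le[OF ch Xs_scale[OF f]])
  finally have "cmod c * opnorm \<phi> f \<le> opnorm \<phi> (\<lambda>k. c * f k)"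
    using False by (simp add: norm_divide field_simps)
  thus ?thesis using opnorm_scale_le[OF ch f, of c] by simp
qed

lemma opnorm_zero_iff:
  assumes ch: "is_character \<phi>" and f: "f \<in> Xs \<phi>"
  shows "opnorm \<phi> f = 0 \<longleftrightarrow> f = (\<lambda>_. 0)"
proof
  assume "opnorm \<phi> f = 0"
  hence "f k = 0" for k using opnorm_bound[OF ch f, of k] XsD(1)[OF f, of k] by (cases "\<phi> k = 0") auto
  thus "f = (\<lambda>_. 0)" by auto
next
  assume "f = (\<lambda>_. 0)"
  thus "opnorm \<phi> f = 0" using opnorm_le[OF ch, of "\<lambda>_. 0" 0] opnorm_nonneg[OF ch Xs_zero_fun[OF ch]] by simp
qed

lemma opnorm_ract:
  assumes ch: "is_character \<phi>" and f: "f \<in> Xs \<phi>"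
  shows "opnorm \<phi> (\<lambda>k. if \<phi> k = 0 then f (a * k) else 0) \<le> norm a * opnorm \<phi> f"
proof (rule opnorm_le[OF ch])
  fix k assume k: "\<phi> k = 0" "norm k \<le> 1"
  have ak: "\<phi> (a * k) = 0" using k by (simp add: char_mult[OF ch])
  have "cmod (f (a * k)) \<le> opnorm \<phi> f * norm (a * k)" by (rule opnorm_bound[OF ch f ak])
  also have "\<dots> \<le> opnorm \<phi> f * (norm a * norm k)"
    by (rule mult_left_mono[OF norm_mult_ineq opnorm_nonneg[OF ch f]])
  also have "\<dots> \<le> opnorm \<phi> f * (norm a * 1)"
    by (intro mult_left_mono k(2) opnorm_nonneg[OF ch f] norm_ge_zero)
  finally show "cmod (if \<phi> k = 0 then f (a * k) else 0) \<le> norm a * opnorm \<phi> f" using k by (simp add: mult.commute)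
qed

lemma opnorm_lact:
  assumes ch: "is_character \<phi>" and f: "f \<in> Xs \<phi>"
  shows "opnorm \<phi> (\<lambda>k. \<phi> a * f k) \<le> norm a * opnorm \<phi> f"
  using opnorm_scale[OF ch f, of "\<phi> a"] char_bound[OF ch, of a] opnorm_nonneg[OF ch f]
  by (simp add: mult_right_mono)

lemma Xs_diff_bound:
  assumes ch: "is_character \<phi>" and f: "f \<in> Xs \<phi>" and g: "g \<in> Xs \<phi>" and k: "\<phi> k = 0"
  shows "cmod (f k - g k) \<le> opnorm \<phi> (\<lambda>k. f k + (-1) * g k) * norm k"
  using opnorm_bound[OF ch Xs_add[OF f Xs_scale[OF g]] k, of "-1"] by simp

lemma Xs_complete:
  fixes \<phi> :: "'a::complex_banach_algebra \<Rightarrow> complex"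
  assumes ch: "is_character \<phi>" and s: "\<And>n. f n \<in> Xs \<phi>"
    and cau: "\<And>e. e > 0 \<Longrightarrow> \<exists>N. \<forall>m\<ge>N. \<forall>n\<ge>N. opnorm \<phi> (\<lambda>k. f m k + (-1) * f n k) < e"
  shows "\<exists>l\<in>Xs \<phi>. (\<lambda>n. opnorm \<phi> (\<lambda>k. f n k + (-1) * l k)) \<longlonglongrightarrow> 0"
proof -
  have ptC: "Cauchy (\<lambda>n. f n k)" if k: "\<phi> k = 0" for k
  proof (rule metric_CauchyI)
    fix e :: real assume e: "e > 0"
    define e' where "e' = e / (norm k + 1)"
    have e': "e' > 0" using e unfolding e'_def by (intro divide_pos_pos) (auto intro: add_nonneg_pos)
    obtain N where N: "\<And>m n. m \<ge> N \<Longrightarrow> n \<ge> N \<Longrightarrow> opnorm \<phi> (\<lambda>k. f m k + (-1) * f n k) < e'"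
      using cau[OF e'] by blast
    have "dist (f m k) (f n k) < e" if "m \<ge> N" "n \<ge> N" for m n
    proof -
      have "dist (f m k) (f n k) \<le> opnorm \<phi> (\<lambda>k. f m k + (-1) * f n k) * norm k"
        unfolding dist_norm by (rule Xs_diff_bound[OF ch s s k])
      also have "\<dots> \<le> e' * norm k" by (rule mult_right_mono) (use N[OF that] in auto)
      also have "\<dots> < e' * (norm k + 1)" using e' by simp
      also have "\<dots> = e" proof - have "norm k + 1 \<noteq> 0" using norm_ge_zero[of k] by linarith thus ?thesis by (simp add: e'_def) qed
      finally show ?thesis .
    qed
    thus "\<exists>M. \<forall>m\<ge>M. \<forall>n\<ge>M. dist (f m k) (f n k) < e" by blast
  qed
  define l where "l k = (if \<phi> k = 0 then lim (\<lambda>n. f n k) else 0)" for k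
  have lim: "(\<lambda>n. f n k) \<longlonglongrightarrow> l k" if k: "\<phi> k = 0" for k
    using ptC[OF k] by (simp add: l_def k Cauchy_convergent_iff convergent_LIMSEQ_iff)
  have lX: "l \<in> Xs \<phi>"
  proof -
    obtain N where N: "\<And>m n. m \<ge> N \<Longrightarrow> n \<ge> N \<Longrightarrow> opnorm \<phi> (\<lambda>k. f m k + (-1) * f n k) < 1"
      using cau[of 1] by auto
    show ?thesis
    proof (rule XsI[where K="opnorm \<phi> (f N) + 1"])
      fix k assume "\<phi> k \<noteq> 0" thus "l k = 0" by (simp add: l_def)
    next
      fix k k' assume k: "\<phi> k = 0" and k': "\<phi> k' = 0"
      have kk: "\<phi> (k + k') = 0" using k k' by (simp add: char_add[OF ch])
      have "(\<lambda>n. f n (k + k')) \<longlonglongrightarrow> l k + l k'"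
        using tendsto_add[OF lim[OF k] lim[OF k']] XsD(2)[OF s k k'] by simp
      thus "l (k + k') = l k + l k'" using lim[OF kk] LIMSEQ_unique by blast
    next
      fix c k assume k: "\<phi> k = 0"
      have kk: "\<phi> (scaleC c k) = 0" using k by (simp add: char_scaleC[OF ch])
      have "(\<lambda>n. f n (scaleC c k)) \<longlonglongrightarrow> c * l k"
        using tendsto_mult_left[OF lim[OF k], of c] XsD(3)[OF s k] by simp
      thus "l (scaleC c k) = c * l k" using lim[OF kk] LIMSEQ_unique by blast
    next
      fix k assume k: "\<phi> k = 0"
      have "eventually (\<lambda>n. cmod (f n k) \<le> (opnorm \<phi> (f N) + 1) * norm k) sequentially"
      proof (rule eventually_sequentiallyI[of N])
        fix n assume n: "n \<ge> N"
        have "cmod (f n k) \<le> cmod (f N k) + cmod (f n k - f N k)" by (rule norm_triangle_sub)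
        also have "cmod (f N k) \<le> opnorm \<phi> (f N) * norm k" by (rule opnorm_bound[OF ch s k])
        also have "cmod (f n k - f N k) \<le> opnorm \<phi> (\<lambda>k. f n k + (-1) * f N k) * norm k"
          by (rule Xs_diff_bound[OF ch s s k])
        also have "\<dots> \<le> 1 * norm k" by (rule mult_right_mono) (use N[OF n order_refl] in auto)
        finally show "cmod (f n k) \<le> (opnorm \<phi> (f N) + 1) * norm k" by (simp add: algebra_simps)
      qed
      thus "cmod (l k) \<le> (opnorm \<phi> (f N) + 1) * norm k"
        by (intro tendsto_upperbound[OF tendsto_norm[OF lim[OF k]]]) simp_all
    qed
  qed
  have "(\<lambda>n. opnorm \<phi> (\<lambda>k. f n k + (-1) * l k)) \<longlonglongrightarrow> 0"
  proof (rule LIMSEQ_I)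
    fix e :: real assume e: "e > 0"
    obtain N where N: "\<And>m n. m \<ge> N \<Longrightarrow> n \<ge> N \<Longrightarrow> opnorm \<phi> (\<lambda>k. f m k + (-1) * f n k) < e / 2"
      using cau[of "e/2"] e by auto
    have "norm (opnorm \<phi> (\<lambda>k. f n k + (-1) * l k) - 0) < e" if n: "n \<ge> N" for n
    proof -
      have "opnorm \<phi> (\<lambda>k. f n k + (-1) * l k) \<le> e / 2"
      proof (rule opnorm_le[OF ch])
        fix k assume k: "\<phi> k = 0" "norm k \<le> 1"
        have ev: "eventually (\<lambda>m. cmod (f n k - f m k) \<le> e / 2) sequentially"
        proof (rule eventually_sequentiallyI[of N])
          fix m assume m: "m \<ge> N"
          have "cmod (f n k - f m k) \<le> opnorm \<phi> (\<lambda>k. f n k + (-1) * f m k) * norm k"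
            by (rule Xs_diff_bound[OF ch s s k(1)])
          also have "\<dots> \<le> (e / 2) * 1"
            by (rule mult_mono) (use N[OF n m] k(2) opnorm_nonneg[OF ch Xs_add[OF s Xs_scale[OF s]]] e in auto)
          finally show "cmod (f n k - f m k) \<le> e / 2" by simp
        qed
        have "(\<lambda>m. cmod (f n k - f m k)) \<longlonglongrightarrow> cmod (f n k - l k)"
          by (intro tendsto_norm tendsto_diff tendsto_const lim[OF k(1)])
        hence "cmod (f n k - l k) \<le> e / 2" using ev by (rule tendsto_upperbound) simp
        thus "cmod (f n k + (-1) * l k) \<le> e / 2" by simp
      qed
      moreover have "0 \<le> opnorm \<phi> (\<lambda>k. f n k + (-1) * l k)"
        by (rule opnorm_nonneg[OF ch Xs_add[OF s Xs_scale[OF lX]]])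
      ultimately show ?thesis using e by simp
    qed
    thus "\<exists>N. \<forall>n\<ge>N. norm (opnorm \<phi> (\<lambda>k. f n k + (-1) * l k) - 0) < e" by blast
  qed
  thus ?thesis using lX by blast
qed

definition kmod :: "('a::complex_banach_algebra \<Rightarrow> complex) \<Rightarrow> ('a, ('a \<Rightarrow> complex) \<Rightarrow> complex) bimod" where
  "kmod \<phi> = \<lparr>bcarrier = enc ` Xs \<phi>,
     bzero = enc (\<lambda>_. 0),
     badd = (\<lambda>X Y. enc (\<lambda>k. dec X k + dec Y k)),
     bscale = (\<lambda>c X. enc (\<lambda>k. c * dec X k)),
     bnorm = (\<lambda>X. opnorm \<phi> (dec X)),
     blact = (\<lambda>a X. enc (\<lambda>k. \<phi> a * dec X k)),
     bract = (\<lambda>X a. enc (\<lambda>k. if \<phi> k = 0 then dec X (a * k) else 0))\<rparr>"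

lemma kmod_simps:
  "bcarrier (kmod \<phi>) = enc ` Xs \<phi>"
  "bzero (kmod \<phi>) = enc (\<lambda>_. 0)"
  "badd (kmod \<phi>) X Y = enc (\<lambda>k. dec X k + dec Y k)"
  "bscale (kmod \<phi>) c X = enc (\<lambda>k. c * dec X k)"
  "bnorm (kmod \<phi>) X = opnorm \<phi> (dec X)"
  "blact (kmod \<phi>) a X = enc (\<lambda>k. \<phi> a * dec X k)"
  "bract (kmod \<phi>) X a = enc (\<lambda>k. if \<phi> k = 0 then dec X (a * k) else 0)"
  by (simp_all add: kmod_def)

lemma kmod_bimodule:
  fixes \<phi> :: "'a::complex_banach_algebra \<Rightarrow> complex"
  assumes ch: "is_character \<phi>"
  shows "banach_bimodule (kmod \<phi>)"
  unfolding banach_bimodule_def Let_def kmod_simps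
proof (intro conjI)
  note X = Xs_zero_fun[OF ch] Xs_add Xs_scale Xs_ract[OF ch]
  show "enc (\<lambda>_. 0) \<in> enc ` Xs \<phi>" using X by blast
  show "\<forall>x\<in>enc ` Xs \<phi>. \<forall>y\<in>enc ` Xs \<phi>. enc (\<lambda>k. dec x k + dec y k) \<in> enc ` Xs \<phi>" using X by auto
  show "\<forall>c. \<forall>x\<in>enc ` Xs \<phi>. enc (\<lambda>k. c * dec x k) \<in> enc ` Xs \<phi>" by (auto intro!: imageI Xs_scale)
  show "\<forall>a. \<forall>x\<in>enc ` Xs \<phi>. enc (\<lambda>k. \<phi> a * dec x k) \<in> enc ` Xs \<phi>" by (auto intro!: imageI Xs_scale)
  show "\<forall>a. \<forall>x\<in>enc ` Xs \<phi>. enc (\<lambda>k. if \<phi> k = 0 then dec x (a * k) else 0) \<in> enc ` Xs \<phi>" using X by auto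
  show "\<forall>x\<in>enc ` Xs \<phi>. \<forall>y\<in>enc ` Xs \<phi>. \<forall>w\<in>enc ` Xs \<phi>.
     enc (\<lambda>k. dec (enc (\<lambda>k. dec x k + dec y k)) k + dec w k) = enc (\<lambda>k. dec x k + dec (enc (\<lambda>k. dec y k + dec w k)) k)"
    by (auto simp: algebra_simps)
  show "\<forall>x\<in>enc ` Xs \<phi>. \<forall>y\<in>enc ` Xs \<phi>. enc (\<lambda>k. dec x k + dec y k) = enc (\<lambda>k. dec y k + dec x k)"
    by (auto simp: algebra_simps)
  show "\<forall>x\<in>enc ` Xs \<phi>. enc (\<lambda>k. dec (enc (\<lambda>_. 0)) k + dec x k) = x" by auto
  show "\<forall>x\<in>enc ` Xs \<phi>. enc (\<lambda>k. dec x k + dec (enc (\<lambda>k. - 1 * dec x k)) k) = enc (\<lambda>_. 0)" by auto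
  show "\<forall>c. \<forall>x\<in>enc ` Xs \<phi>. \<forall>y\<in>enc ` Xs \<phi>. enc (\<lambda>k. c * dec (enc (\<lambda>k. dec x k + dec y k)) k) =
          enc (\<lambda>k. dec (enc (\<lambda>k. c * dec x k)) k + dec (enc (\<lambda>k. c * dec y k)) k)"
    by (auto simp: algebra_simps)
  show "\<forall>c d. \<forall>x\<in>enc ` Xs \<phi>. enc (\<lambda>k. (c + d) * dec x k) = enc (\<lambda>k. dec (enc (\<lambda>k. c * dec x k)) k + dec (enc (\<lambda>k. d * dec x k)) k)"
    by (auto simp: algebra_simps)
  show "\<forall>c d. \<forall>x\<in>enc ` Xs \<phi>. enc (\<lambda>k. c * dec (enc (\<lambda>k. d * dec x k)) k) = enc (\<lambda>k. (c * d) * dec x k)"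
    by (auto simp: algebra_simps)
  show "\<forall>x\<in>enc ` Xs \<phi>. enc (\<lambda>k. 1 * dec x k) = x" by auto
  show "\<forall>x\<in>enc ` Xs \<phi>. 0 \<le> opnorm \<phi> (dec x)" using opnorm_nonneg[OF ch] by auto
  show "\<forall>x\<in>enc ` Xs \<phi>. (opnorm \<phi> (dec x) = 0) = (x = enc (\<lambda>_. 0))" using opnorm_zero_iff[OF ch] by auto
  show "\<forall>x\<in>enc ` Xs \<phi>. \<forall>y\<in>enc ` Xs \<phi>. opnorm \<phi> (dec (enc (\<lambda>k. dec x k + dec y k))) \<le> opnorm \<phi> (dec x) + opnorm \<phi> (dec y)"
    using opnorm_add[OF ch] by auto
  show "\<forall>c. \<forall>x\<in>enc ` Xs \<phi>. opnorm \<phi> (dec (enc (\<lambda>k. c * dec x k))) = cmod c * opnorm \<phi> (dec x)"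
    using opnorm_scale[OF ch] by auto
  show "\<forall>s. (\<forall>n. s n \<in> enc ` Xs \<phi>) \<longrightarrow>
        (\<forall>e>0. \<exists>N. \<forall>m\<ge>N. \<forall>n\<ge>N. opnorm \<phi> (dec (enc (\<lambda>k. dec (s m) k + dec (enc (\<lambda>k. - 1 * dec (s n) k)) k))) < e) \<longrightarrow>
        (\<exists>l\<in>enc ` Xs \<phi>. (\<lambda>n. opnorm \<phi> (dec (enc (\<lambda>k. dec (s n) k + dec (enc (\<lambda>k. - 1 * dec l k)) k)))) \<longlonglongrightarrow> 0)"
  proof (intro allI impI)
    fix s :: "nat \<Rightarrow> ('a \<Rightarrow> complex) \<Rightarrow> complex"
    assume s: "\<forall>n. s n \<in> enc ` Xs \<phi>"
      and cau: "\<forall>e>0. \<exists>N. \<forall>m\<ge>N. \<forall>n\<ge>N. opnorm \<phi> (dec (enc (\<lambda>k. dec (s m) k + dec (enc (\<lambda>k. - 1 * dec (s n) k)) k))) < e"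
    have sX: "dec (s n) \<in> Xs \<phi>" for n
    proof -
      obtain f where "f \<in> Xs \<phi>" "s n = enc f" using s by blast
      thus ?thesis by simp
    qed
    have "\<And>e. e > 0 \<Longrightarrow> \<exists>N. \<forall>m\<ge>N. \<forall>n\<ge>N. opnorm \<phi> (\<lambda>k. dec (s m) k + (-1) * dec (s n) k) < e"
      using cau by simp
    then obtain l where l: "l \<in> Xs \<phi>" "(\<lambda>n. opnorm \<phi> (\<lambda>k. dec (s n) k + (-1) * l k)) \<longlonglongrightarrow> 0"
      using Xs_complete[where f="\<lambda>n. dec (s n)", OF ch sX] by blast
    show "\<exists>l\<in>enc ` Xs \<phi>. (\<lambda>n. opnorm \<phi> (dec (enc (\<lambda>k. dec (s n) k + dec (enc (\<lambda>k. - 1 * dec l k)) k)))) \<longlonglongrightarrow> 0"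
    proof (rule bexI[of _ "enc l"])
      show "enc l \<in> enc ` Xs \<phi>" using l(1) by blast
      have "(\<lambda>n. opnorm \<phi> (dec (enc (\<lambda>k. dec (s n) k + dec (enc (\<lambda>k. - 1 * dec (enc l) k)) k)))) = (\<lambda>n. opnorm \<phi> (\<lambda>k. dec (s n) k + (-1) * l k))"
        by simp
      thus "(\<lambda>n. opnorm \<phi> (dec (enc (\<lambda>k. dec (s n) k + dec (enc (\<lambda>k. - 1 * dec (enc l) k)) k)))) \<longlonglongrightarrow> 0"
        using l(2) by simp
    qed
  qed
  show "\<forall>a b. \<forall>x\<in>enc ` Xs \<phi>. enc (\<lambda>k. \<phi> (a * b) * dec x k) = enc (\<lambda>k. \<phi> a * dec (enc (\<lambda>k. \<phi> b * dec x k)) k)"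
    by (clarsimp simp: char_mult[OF ch] mult.assoc)
  show "\<forall>a b. \<forall>x\<in>enc ` Xs \<phi>. enc (\<lambda>k. if \<phi> k = 0 then dec x (a * b * k) else 0) =
      enc (\<lambda>k. if \<phi> k = 0 then dec (enc (\<lambda>k. if \<phi> k = 0 then dec x (a * k) else 0)) (b * k) else 0)"
    by (clarsimp; rule ext; simp add: char_mult[OF ch] mult.assoc)
  show "\<forall>a b. \<forall>x\<in>enc ` Xs \<phi>. enc (\<lambda>k. if \<phi> k = 0 then dec (enc (\<lambda>k. \<phi> a * dec x k)) (b * k) else 0) =
      enc (\<lambda>k. \<phi> a * dec (enc (\<lambda>k. if \<phi> k = 0 then dec x (b * k) else 0)) k)"
    by (clarsimp; rule ext; simp)
  show "\<forall>a b. \<forall>x\<in>enc ` Xs \<phi>. enc (\<lambda>k. \<phi> (a + b) * dec x k) = enc (\<lambda>k. dec (enc (\<lambda>k. \<phi> a * dec x k)) k + dec (enc (\<lambda>k. \<phi> b * dec x k)) k)"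
    by (clarsimp simp: char_add[OF ch] algebra_simps)
  show "\<forall>a b. \<forall>x\<in>enc ` Xs \<phi>. enc (\<lambda>k. if \<phi> k = 0 then dec x ((a + b) * k) else 0) =
      enc (\<lambda>k. dec (enc (\<lambda>k. if \<phi> k = 0 then dec x (a * k) else 0)) k + dec (enc (\<lambda>k. if \<phi> k = 0 then dec x (b * k) else 0)) k)"
  proof (intro allI ballI)
    fix a b x assume "x \<in> enc ` Xs \<phi>"
    then obtain f where f: "f \<in> Xs \<phi>" "x = enc f" by blast
    show "enc (\<lambda>k. if \<phi> k = 0 then dec x ((a + b) * k) else 0) =
      enc (\<lambda>k. dec (enc (\<lambda>k. if \<phi> k = 0 then dec x (a * k) else 0)) k + dec (enc (\<lambda>k. if \<phi> k = 0 then dec x (b * k) else 0)) k)"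
      unfolding f(2) dec_enc enc_inj
    proof (rule ext)
      fix k show "(if \<phi> k = 0 then f ((a + b) * k) else 0) = (if \<phi> k = 0 then f (a * k) else 0) + (if \<phi> k = 0 then f (b * k) else 0)"
        using XsD(2)[OF f(1), of "a * k" "b * k"] by (simp add: distrib_right char_mult[OF ch])
    qed
  qed
  show "\<forall>a. \<forall>x\<in>enc ` Xs \<phi>. \<forall>y\<in>enc ` Xs \<phi>. enc (\<lambda>k. \<phi> a * dec (enc (\<lambda>k. dec x k + dec y k)) k) =
     enc (\<lambda>k. dec (enc (\<lambda>k. \<phi> a * dec x k)) k + dec (enc (\<lambda>k. \<phi> a * dec y k)) k)"
    by (clarsimp simp: algebra_simps)
  show "\<forall>a. \<forall>x\<in>enc ` Xs \<phi>. \<forall>y\<in>enc ` Xs \<phi>. enc (\<lambda>k. if \<phi> k = 0 then dec (enc (\<lambda>k. dec x k + dec y k)) (a * k) else 0) =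
     enc (\<lambda>k. dec (enc (\<lambda>k. if \<phi> k = 0 then dec x (a * k) else 0)) k + dec (enc (\<lambda>k. if \<phi> k = 0 then dec y (a * k) else 0)) k)"
    by (clarsimp; rule ext; simp)
  show "\<forall>c a. \<forall>x\<in>enc ` Xs \<phi>. enc (\<lambda>k. \<phi> (scaleC c a) * dec x k) = enc (\<lambda>k. c * dec (enc (\<lambda>k. \<phi> a * dec x k)) k)"
    by (clarsimp simp: char_scaleC[OF ch] algebra_simps)
  show "\<forall>c a. \<forall>x\<in>enc ` Xs \<phi>. enc (\<lambda>k. if \<phi> k = 0 then dec x (scaleC c a * k) else 0) =
     enc (\<lambda>k. c * dec (enc (\<lambda>k. if \<phi> k = 0 then dec x (a * k) else 0)) k)"
  proof (intro allI ballI)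
    fix c a x assume "x \<in> enc ` Xs \<phi>"
    then obtain f where f: "f \<in> Xs \<phi>" "x = enc f" by blast
    show "enc (\<lambda>k. if \<phi> k = 0 then dec x (scaleC c a * k) else 0) = enc (\<lambda>k. c * dec (enc (\<lambda>k. if \<phi> k = 0 then dec x (a * k) else 0)) k)"
      unfolding f(2) dec_enc enc_inj
    proof (rule ext)
      fix k show "(if \<phi> k = 0 then f (scaleC c a * k) else 0) = c * (if \<phi> k = 0 then f (a * k) else 0)"
        using XsD(3)[OF f(1), of "a * k" c] by (simp add: mult_scaleC_left char_mult[OF ch])
    qed
  qed
  show "\<forall>c a. \<forall>x\<in>enc ` Xs \<phi>. enc (\<lambda>k. \<phi> a * dec (enc (\<lambda>k. c * dec x k)) k) = enc (\<lambda>k. c * dec (enc (\<lambda>k. \<phi> a * dec x k)) k)"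
    by (clarsimp simp: algebra_simps)
  show "\<forall>c a. \<forall>x\<in>enc ` Xs \<phi>. enc (\<lambda>k. if \<phi> k = 0 then dec (enc (\<lambda>k. c * dec x k)) (a * k) else 0) =
     enc (\<lambda>k. c * dec (enc (\<lambda>k. if \<phi> k = 0 then dec x (a * k) else 0)) k)"
    by (clarsimp; rule ext; simp)
  show "\<exists>K. \<forall>a. \<forall>x\<in>enc ` Xs \<phi>. opnorm \<phi> (dec (enc (\<lambda>k. \<phi> a * dec x k))) \<le> K * norm a * opnorm \<phi> (dec x)"
    by (rule exI[of _ 1]) (auto simp: opnorm_lact[OF ch])
  show "\<exists>K. \<forall>a. \<forall>x\<in>enc ` Xs \<phi>. opnorm \<phi> (dec (enc (\<lambda>k. if \<phi> k = 0 then dec x (a * k) else 0))) \<le> K * norm a * opnorm \<phi> (dec x)"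
  proof (rule exI[of _ 1], intro allI ballI)
    fix a x assume "x \<in> enc ` Xs \<phi>"
    then obtain f where f: "f \<in> Xs \<phi>" "x = enc f" by blast
    show "opnorm \<phi> (dec (enc (\<lambda>k. if \<phi> k = 0 then dec x (a * k) else 0))) \<le> 1 * norm a * opnorm \<phi> (dec x)"
      unfolding f(2) dec_enc using opnorm_ract[OF ch f(1), of a] by simp
  qed
qed

definition Dk :: "('a::complex_banach_algebra \<Rightarrow> complex) \<Rightarrow> 'a \<Rightarrow> 'a \<Rightarrow> (('a \<Rightarrow> complex) \<Rightarrow> complex) \<Rightarrow> complex" where
  "Dk \<phi> u a X = dec X (a * u - scaleC (\<phi> a) u)"

lemma ker_y: "is_character \<phi> \<Longrightarrow> \<phi> u = 1 \<Longrightarrow> \<phi> (a * u - scaleC (\<phi> a) u) = 0"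
  by (simp add: char_diff char_mult char_scaleC)

lemma norm_y: "is_character \<phi> \<Longrightarrow> norm (a * u - scaleC (\<phi> a) u) \<le> 2 * norm u * norm a"
proof -
  assume ch: "is_character \<phi>"
  have "norm (a * u - scaleC (\<phi> a) u) \<le> norm (a * u) + norm (scaleC (\<phi> a) u)" by (rule norm_triangle_ineq4)
  also have "\<dots> \<le> norm a * norm u + norm a * norm u"
    by (intro add_mono norm_mult_ineq) (simp add: norm_scaleC mult_right_mono char_bound[OF ch])
  finally show ?thesis by (simp add: mult.commute mult.left_commute)
qed

lemma dnorm_le:
  assumes "z \<in> bcarrier M" "bnorm M z \<le> 1"
    and "\<And>x. x \<in> bcarrier M \<Longrightarrow> bnorm M x \<le> 1 \<Longrightarrow> cmod (h x) \<le> B"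
  shows "dnorm M h \<le> B"
  unfolding dnorm_def by (rule cSup_least) (use assms in auto)

lemma dnorm_upper:
  assumes "x \<in> bcarrier M" "bnorm M x \<le> 1"
    and "\<And>x. x \<in> bcarrier M \<Longrightarrow> bnorm M x \<le> 1 \<Longrightarrow> cmod (h x) \<le> B"
  shows "cmod (h x) \<le> dnorm M h"
  unfolding dnorm_def by (rule cSup_upper) (use assms in \<open>auto intro!: bdd_aboveI2\<close>)

lemma Dk_derivation:
  fixes \<phi> :: "'a::complex_banach_algebra \<Rightarrow> complex"
  assumes ch: "is_character \<phi>" and u: "\<phi> u = 1"
  shows "continuous_derivation (kmod \<phi>) (Dk \<phi> u)"
  unfolding continuous_derivation_def
proof (intro conjI allI ballI)
  note ky = ker_y[OF ch u]
  fix a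
  show "in_dual (kmod \<phi>) (Dk \<phi> u a)"
    unfolding in_dual_def kmod_simps
  proof (intro conjI allI ballI)
    fix x y assume "x \<in> enc ` Xs \<phi>" "y \<in> enc ` Xs \<phi>"
    show "Dk \<phi> u a (enc (\<lambda>k. dec x k + dec y k)) = Dk \<phi> u a x + Dk \<phi> u a y" by (simp add: Dk_def)
  next
    fix c x show "Dk \<phi> u a (enc (\<lambda>k. c * dec x k)) = c * Dk \<phi> u a x" by (simp add: Dk_def)
  next
    show "\<exists>K. \<forall>x\<in>enc ` Xs \<phi>. cmod (Dk \<phi> u a x) \<le> K * opnorm \<phi> (dec x)"
    proof (rule exI[of _ "norm (a * u - scaleC (\<phi> a) u)"], intro ballI)
      fix x assume "x \<in> enc ` Xs \<phi>"
      then obtain f where f: "f \<in> Xs \<phi>" "x = enc f" by blast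
      show "cmod (Dk \<phi> u a x) \<le> norm (a * u - scaleC (\<phi> a) u) * opnorm \<phi> (dec x)"
        using opnorm_bound[OF ch f(1) ky] f(2) by (simp add: Dk_def mult.commute)
    qed
  qed
next
  fix a b x assume "x \<in> bcarrier (kmod \<phi>)"
  then obtain f where f: "f \<in> Xs \<phi>" "x = enc f" by (auto simp: kmod_simps)
  have e: "(a + b) * u - scaleC (\<phi> (a + b)) u = (a * u - scaleC (\<phi> a) u) + (b * u - scaleC (\<phi> b) u)"
    by (simp add: char_add[OF ch] scaleC_add_left algebra_simps)
  show "Dk \<phi> u (a + b) x = Dk \<phi> u a x + Dk \<phi> u b x"
    unfolding Dk_def f(2) dec_enc e by (rule XsD(2)[OF f(1) ker_y[OF ch u] ker_y[OF ch u]])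
next
  fix c a x assume "x \<in> bcarrier (kmod \<phi>)"
  then obtain f where f: "f \<in> Xs \<phi>" "x = enc f" by (auto simp: kmod_simps)
  have e: "scaleC c a * u - scaleC (\<phi> (scaleC c a)) u = scaleC c (a * u - scaleC (\<phi> a) u)"
    by (simp add: char_scaleC[OF ch] mult_scaleC_left scaleC_diff_right scaleC_scaleC)
  show "Dk \<phi> u (scaleC c a) x = c * Dk \<phi> u a x"
    unfolding Dk_def f(2) dec_enc e by (rule XsD(3)[OF f(1) ker_y[OF ch u]])
next
  fix a b x assume "x \<in> bcarrier (kmod \<phi>)"
  then obtain f where f: "f \<in> Xs \<phi>" "x = enc f" by (auto simp: kmod_simps)
  let ?ya = "a * u - scaleC (\<phi> a) u" and ?yb = "b * u - scaleC (\<phi> b) u"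
  have k1: "\<phi> (a * ?yb) = 0" using ker_y[OF ch u, of b] by (simp add: char_mult[OF ch])
  have k2: "\<phi> (scaleC (\<phi> b) ?ya) = 0" using ker_y[OF ch u, of a] by (simp add: char_scaleC[OF ch])
  have e: "a * b * u - scaleC (\<phi> (a * b)) u = a * ?yb + scaleC (\<phi> b) ?ya"
    by (simp add: char_mult[OF ch] algebra_simps mult_scaleC_right scaleC_diff_right scaleC_scaleC mult.assoc mult.commute)
  have "Dk \<phi> u (a * b) x = f (a * ?yb) + f (scaleC (\<phi> b) ?ya)"
    unfolding Dk_def f(2) dec_enc e by (rule XsD(2)[OF f(1) k1 k2])
  also have "f (scaleC (\<phi> b) ?ya) = \<phi> b * f ?ya" by (rule XsD(3)[OF f(1) ker_y[OF ch u]])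
  finally show "Dk \<phi> u (a * b) x = dlact (kmod \<phi>) a (Dk \<phi> u b) x + dract (kmod \<phi>) (Dk \<phi> u a) b x"
    unfolding dlact_def dract_def kmod_simps Dk_def f(2) dec_enc using ker_y[OF ch u, of b] by simp
next
  show "\<exists>K. \<forall>a. dnorm (kmod \<phi>) (Dk \<phi> u a) \<le> K * norm a"
  proof (intro exI allI)
    fix a
    show "dnorm (kmod \<phi>) (Dk \<phi> u a) \<le> 2 * norm u * norm a"
    proof (rule dnorm_le[of "enc (\<lambda>_. 0)"])
      show "enc (\<lambda>_. 0) \<in> bcarrier (kmod \<phi>)" using Xs_zero_fun[OF ch] by (simp add: kmod_simps)
      show "bnorm (kmod \<phi>) (enc (\<lambda>_. 0)) \<le> 1" using opnorm_zero_iff[OF ch Xs_zero_fun[OF ch]] by (simp add: kmod_simps)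
    next
      fix x assume "x \<in> bcarrier (kmod \<phi>)" "bnorm (kmod \<phi>) x \<le> 1"
      then obtain f where f: "f \<in> Xs \<phi>" "x = enc f" "opnorm \<phi> f \<le> 1" by (auto simp: kmod_simps)
      have "cmod (f (a * u - scaleC (\<phi> a) u)) \<le> opnorm \<phi> f * norm (a * u - scaleC (\<phi> a) u)"
        by (rule opnorm_bound[OF ch f(1) ker_y[OF ch u]])
      also have "\<dots> \<le> 1 * (2 * norm u * norm a)"
        by (rule mult_mono[OF f(3) norm_y[OF ch]]) simp_all
      finally show "cmod (Dk \<phi> u a x) \<le> 2 * norm u * norm a" by (simp add: Dk_def f(2))
    qed
  qed
qed

lemma Xs_sum:
  fixes m :: nat
  assumes "\<And>j. j < m \<Longrightarrow> d j \<in> Xs \<phi>" and ch: "is_character \<phi>"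
  shows "(\<lambda>k. \<Sum>j<m. d j k) \<in> Xs \<phi>"
  using assms(1)
proof (induction m)
  case 0 then show ?case using Xs_zero_fun[OF ch] by simp
next
  case (Suc m)
  have "(\<lambda>k. (\<Sum>j<m. d j k) + d m k) \<in> Xs \<phi>" by (rule Xs_add) (use Suc in auto)
  thus ?case by simp
qed

lemma approx_left_amen:
  fixes \<phi> :: "'a::complex_banach_algebra \<Rightarrow> complex" and as :: "nat \<Rightarrow> 'a"
  assumes ch: "is_character \<phi>" and aa: "approximately_amenable TYPE('a)" and eps: "0 < \<epsilon>"
  shows "\<exists>v. \<phi> v = 1 \<and> (\<Sum>j<n. norm (as j * v - scaleC (\<phi> (as j)) v)) < \<epsilon>"
proof (rule ccontr)
  assume "\<not> ?thesis"
  hence far: "\<And>v. \<phi> v = 1 \<Longrightarrow> \<epsilon> \<le> (\<Sum>j<n. norm (as j * v - scaleC (\<phi> (as j)) v))" by force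
  obtain u where u: "\<phi> u = 1" using char_unit[OF ch] by blast
  obtain f where fX: "\<And>j. j < n \<Longrightarrow> f j \<in> Xs \<phi> \<and> opnorm \<phi> (f j) \<le> 1"
    and fsum: "\<And>k. \<phi> k = 0 \<Longrightarrow> (\<Sum>j<n. f j (as j * k - scaleC (\<phi> (as j)) k)) = 0"
    and fre: "Re (\<Sum>j<n. f j (as j * u - scaleC (\<phi> (as j)) u)) = \<epsilon> / 2"
    using sep_functionals[OF ch u eps far] by blast
  define M where "M = kmod \<phi>"
  define D where "D = Dk \<phi> u"
  have "approx_inner M D"
    using aa kmod_bimodule[OF ch] Dk_derivation[OF ch u]
    unfolding approximately_amenable_def M_def D_def by blast
  then obtain F :: "((('a \<Rightarrow> complex) \<Rightarrow> complex) \<Rightarrow> complex) filter"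
    where F: "F \<noteq> bot" "eventually (in_dual M) F"
      and lim: "\<And>a. ((\<lambda>g. dnorm M (\<lambda>x. D a x - (dlact M a g x - dract M g a x))) \<longlongrightarrow> 0) F"
    unfolding approx_inner_def by blast
  define \<eta> where "\<eta> = \<epsilon> / (2 * (real n + 1))"
  have eta: "\<eta> > 0" using eps by (simp add: \<eta>_def)
  have "eventually (\<lambda>g. in_dual M g \<and> (\<forall>j\<in>{..<n}. dnorm M (\<lambda>x. D (as j) x - (dlact M (as j) g x - dract M g (as j) x)) < \<eta>)) F"
    using F(2) eventually_ball_finite[of "{..<n}" "\<lambda>g j. dnorm M (\<lambda>x. D (as j) x - (dlact M (as j) g x - dract M g (as j) x)) < \<eta>" F]
      order_tendstoD(2)[OF lim eta]
    by (auto intro: eventually_conj)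
  then obtain g where g: "in_dual M g" and gd: "\<And>j. j < n \<Longrightarrow> dnorm M (\<lambda>x. D (as j) x - (dlact M (as j) g x - dract M g (as j) x)) < \<eta>"
    using eventually_happens'[OF F(1)] by blast
  have gD1: "\<forall>x\<in>enc ` Xs \<phi>. \<forall>y\<in>enc ` Xs \<phi>. g (enc (\<lambda>k. dec x k + dec y k)) = g x + g y"
    and gD2: "\<forall>c. \<forall>x\<in>enc ` Xs \<phi>. g (enc (\<lambda>k. c * dec x k)) = c * g x"
    and gD3: "\<exists>K. \<forall>x\<in>enc ` Xs \<phi>. cmod (g x) \<le> K * opnorm \<phi> (dec x)"
    using g unfolding in_dual_def M_def kmod_simps by blast+
  have gadd: "g (enc (\<lambda>k. A k + B k)) = g (enc A) + g (enc B)" if "A \<in> Xs \<phi>" "B \<in> Xs \<phi>" for A B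
  proof -
    have "enc A \<in> enc ` Xs \<phi>" "enc B \<in> enc ` Xs \<phi>" using that by blast+
    from gD1[rule_format, OF this] show ?thesis by simp
  qed
  have gsc: "g (enc (\<lambda>k. c * A k)) = c * g (enc A)" if "A \<in> Xs \<phi>" for A c
  proof -
    have "enc A \<in> enc ` Xs \<phi>" using that by blast
    from gD2[rule_format, OF this, of c] show ?thesis by simp
  qed
  obtain K where K: "\<And>x. x \<in> enc ` Xs \<phi> \<Longrightarrow> cmod (g x) \<le> K * opnorm \<phi> (dec x)"
    using gD3 by blast
  have g0: "g (enc (\<lambda>_. 0)) = 0"
    using gadd[OF Xs_zero_fun[OF ch] Xs_zero_fun[OF ch]] by simp
  define r where "r j = (\<lambda>k. if \<phi> k = 0 then f j (as j * k) else 0)" for j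
  define l where "l j = (\<lambda>k. \<phi> (as j) * f j k)" for j
  define d where "d j = (\<lambda>k. r j k + (-1) * l j k)" for j
  have rX: "r j \<in> Xs \<phi>" if "j < n" for j unfolding r_def by (rule Xs_ract[OF ch]) (use fX[OF that] in blast)
  have lX: "l j \<in> Xs \<phi>" if "j < n" for j unfolding l_def by (rule Xs_scale) (use fX[OF that] in blast)
  have dX: "d j \<in> Xs \<phi>" if "j < n" for j unfolding d_def by (intro Xs_add Xs_scale rX lX that)
  have gd_eq: "g (enc (r j)) - g (enc (l j)) = g (enc (d j))" if "j < n" for j
    using gadd[OF rX[OF that] Xs_scale[OF lX[OF that]], of "-1"] gsc[OF lX[OF that], of "-1"]
    by (simp add: d_def)
  have sum_g: "(\<Sum>j<m. g (enc (d j))) = g (enc (\<lambda>k. \<Sum>j<m. d j k))" if "m \<le> n" for m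
    using that
  proof (induction m)
    case 0 then show ?case using g0 by simp
  next
    case (Suc m)
    have "(\<Sum>j<Suc m. g (enc (d j))) = g (enc (\<lambda>k. \<Sum>j<m. d j k)) + g (enc (d m))"
      using Suc by simp
    also have "\<dots> = g (enc (\<lambda>k. (\<Sum>j<m. d j k) + d m k))"
      by (rule gadd[symmetric]) (use Suc dX in \<open>auto intro!: Xs_sum[OF _ ch]\<close>)
    finally show ?case by simp
  qed
  have dsum0: "(\<lambda>k. \<Sum>j<n. d j k) = (\<lambda>_. 0)"
  proof
    fix k
    show "(\<Sum>j<n. d j k) = 0"
    proof (cases "\<phi> k = 0")
      case True
      have "(\<Sum>j<n. d j k) = (\<Sum>j<n. f j (as j * k - scaleC (\<phi> (as j)) k))"
      proof (rule sum.cong[OF refl])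
        fix j assume "j \<in> {..<n}"
        hence fj: "f j \<in> Xs \<phi>" using fX by blast
        have k1: "\<phi> (as j * k) = 0" using True by (simp add: char_mult[OF ch])
        have k2: "\<phi> (scaleC (- \<phi> (as j)) k) = 0" using True by (simp add: char_scaleC[OF ch])
        have mm: "scaleC (- \<phi> (as j)) k = - scaleC (\<phi> (as j)) k"
          by (metis scaleC_minus1 scaleC_scaleC mult_minus1)
        have ee: "as j * k - scaleC (\<phi> (as j)) k = as j * k + scaleC (- \<phi> (as j)) k"
          unfolding mm by simp
        have "f j (as j * k - scaleC (\<phi> (as j)) k) = f j (as j * k) + f j (scaleC (- \<phi> (as j)) k)"
          unfolding ee by (rule XsD(2)[OF fj k1 k2])
        also have "f j (scaleC (- \<phi> (as j)) k) = (- \<phi> (as j)) * f j k" by (rule XsD(3)[OF fj True])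
        finally have fv: "f j (as j * k - scaleC (\<phi> (as j)) k) = f j (as j * k) + (- \<phi> (as j)) * f j k" .
        have dv: "d j k = f j (as j * k) + (- 1) * (\<phi> (as j) * f j k)"
          unfolding d_def r_def l_def using True by (simp only: if_True refl)
        show "d j k = f j (as j * k - scaleC (\<phi> (as j)) k)" unfolding dv fv by simp
      qed
      also have "\<dots> = 0" by (rule fsum[OF True])
      finally show ?thesis .
    next
      case False
      have "d j k = 0" if "j < n" for j using False XsD(1)[OF conjunct1[OF fX[OF that]] False] by (simp add: d_def r_def l_def)
      thus ?thesis by simp
    qed
  qed
  have sum_rl: "(\<Sum>j<n. g (enc (r j)) - g (enc (l j))) = 0"
    using sum_g[of n] dsum0 g0 gd_eq by simp
  define H where "H j = (\<lambda>x. D (as j) x - (dlact M (as j) g x - dract M g (as j) x))" for j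
  have Hval: "H j (enc (f j)) = f j (as j * u - scaleC (\<phi> (as j)) u) - (g (enc (r j)) - g (enc (l j)))" for j
    unfolding H_def D_def Dk_def dlact_def dract_def M_def kmod_simps dec_enc r_def l_def by simp
  have Hbound: "cmod (H j (enc (f j))) \<le> dnorm M (H j)" if j: "j < n" for j
  proof (rule dnorm_upper[where B="norm (as j * u - scaleC (\<phi> (as j)) u) + 2 * (\<bar>K\<bar> * norm (as j))"])
    show "enc (f j) \<in> bcarrier M" using fX[OF j] by (simp add: M_def kmod_simps)
    show "bnorm M (enc (f j)) \<le> 1" using fX[OF j] by (simp add: M_def kmod_simps)
  next
    fix x assume x: "x \<in> bcarrier M" "bnorm M x \<le> 1"
    then obtain h where h: "h \<in> Xs \<phi>" "x = enc h" "opnorm \<phi> h \<le> 1" by (auto simp: M_def kmod_simps)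
    have hn: "0 \<le> opnorm \<phi> h" by (rule opnorm_nonneg[OF ch h(1)])
    have Kb: "cmod (g (enc A)) \<le> \<bar>K\<bar> * norm (as j)" if A: "A \<in> Xs \<phi>" "opnorm \<phi> A \<le> norm (as j) * opnorm \<phi> h" for A
    proof -
      have oA: "opnorm \<phi> A \<le> norm (as j)"
        using A(2) mult_left_mono[OF h(3), of "norm (as j)"] by simp
      have "cmod (g (enc A)) \<le> K * opnorm \<phi> A" using K[OF imageI[OF A(1)]] by simp
      also have "\<dots> \<le> \<bar>K\<bar> * opnorm \<phi> A" by (rule mult_right_mono[OF abs_ge_self opnorm_nonneg[OF ch A(1)]])
      also have "\<dots> \<le> \<bar>K\<bar> * norm (as j)" by (rule mult_left_mono[OF oA abs_ge_zero])
      finally show ?thesis .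
    qed
    have c1: "cmod (D (as j) x) \<le> norm (as j * u - scaleC (\<phi> (as j)) u)"
    proof -
      have "cmod (h (as j * u - scaleC (\<phi> (as j)) u)) \<le> opnorm \<phi> h * norm (as j * u - scaleC (\<phi> (as j)) u)"
        by (rule opnorm_bound[OF ch h(1) ker_y[OF ch u]])
      also have "\<dots> \<le> 1 * norm (as j * u - scaleC (\<phi> (as j)) u)" by (rule mult_right_mono[OF h(3)]) simp
      finally show ?thesis by (simp add: D_def Dk_def h(2))
    qed
    have c2: "cmod (dlact M (as j) g x) \<le> \<bar>K\<bar> * norm (as j)"
      unfolding dlact_def M_def kmod_simps h(2) dec_enc
      by (rule Kb[OF Xs_ract[OF ch h(1)] opnorm_ract[OF ch h(1)]])
    have c3: "cmod (dract M g (as j) x) \<le> \<bar>K\<bar> * norm (as j)"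
      unfolding dract_def M_def kmod_simps h(2) dec_enc
      by (rule Kb[OF Xs_scale[OF h(1)] opnorm_lact[OF ch h(1)]])
    have t1: "cmod (H j x) \<le> cmod (D (as j) x) + cmod (dlact M (as j) g x - dract M g (as j) x)"
      unfolding H_def by (rule norm_triangle_ineq4)
    have t2: "cmod (dlact M (as j) g x - dract M g (as j) x) \<le> cmod (dlact M (as j) g x) + cmod (dract M g (as j) x)"
      by (rule norm_triangle_ineq4)
    have "cmod (H j x) \<le> cmod (D (as j) x) + (cmod (dlact M (as j) g x) + cmod (dract M g (as j) x))"
      using t1 t2 by linarith
    also have "\<dots> \<le> norm (as j * u - scaleC (\<phi> (as j)) u) + 2 * (\<bar>K\<bar> * norm (as j))"
      using c1 c2 c3 by simp
    finally show "cmod (H j x) \<le> norm (as j * u - scaleC (\<phi> (as j)) u) + 2 * (\<bar>K\<bar> * norm (as j))" .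
  qed
  have "(\<Sum>j<n. H j (enc (f j))) = (\<Sum>j<n. f j (as j * u - scaleC (\<phi> (as j)) u))"
    using sum_rl by (simp add: Hval sum_subtractf)
  hence "\<epsilon> / 2 \<le> cmod (\<Sum>j<n. H j (enc (f j)))" using fre complex_Re_le_cmod by metis
  also have "\<dots> \<le> (\<Sum>j<n. cmod (H j (enc (f j))))" by (rule norm_sum)
  also have "\<dots> \<le> (\<Sum>j<n. \<eta>)"
    by (rule sum_mono) (use Hbound gd in \<open>fastforce simp: H_def\<close>)
  also have "\<dots> = real n * \<eta>" by simp
  also have "\<dots> < \<epsilon> / 2" using eps by (simp add: \<eta>_def field_simps)
  finally show False by simp
qed

definition sgl :: "'a::complex_banach_algebra \<Rightarrow> 'a \<Rightarrow> nat \<Rightarrow> 'a \<times> 'a" where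
  "sgl x y = (\<lambda>k. if k = 0 then (x, y) else (0, 0))"

lemma sgl_sum: "(\<Sum>k. (if k = 0 then c else (0::'b::real_normed_vector))) = c"
  using sums_single[of 0 "\<lambda>_. c"] by (simp add: sums_iff)

lemma trep_sgl: "trep (sgl x y)"
  unfolding trep_def sgl_def
  using summable_single[of 0 "\<lambda>_. norm x * norm y"] by (simp add: if_distrib cong: if_cong)

lemma tval_sgl: "tval (sgl x y) = norm x * norm y"
  unfolding tval_def sgl_def using sgl_sum[of "norm x * norm y"] by (simp add: if_distrib cong: if_cong)

lemma tev_sgl: "bounded_bilinear_form B \<Longrightarrow> tev B (sgl x y) = B x y"
  unfolding tev_def sgl_def using sgl_sum[of "B x y"] bbf_zero1[of B 0]
  by (simp add: if_distrib cong: if_cong)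

lemma tpi_sgl: "tpi (sgl x y) = x * y"
  unfolding tpi_def sgl_def using sgl_sum[of "x * y"] by (simp add: if_distrib cong: if_cong)

lemma tlact_sgl: "tlact a (sgl x y) = sgl (a * x) y"
  by (auto simp: tlact_def sgl_def fun_eq_iff)

lemma tscale_sgl: "tscale c (sgl x y) = sgl (scaleC c x) y"
  by (auto simp: tscale_def sgl_def fun_eq_iff scaleC_zero_right)

lemma good_nonempty:
  fixes \<phi> :: "'a::complex_banach_algebra \<Rightarrow> complex"
  assumes ch: "is_character \<phi>" and aa: "approximately_amenable TYPE('a)"
    and S: "finite S" and e: "0 < e"
  shows "\<exists>v. \<phi> v = 1 \<and> (\<forall>a\<in>S. norm (a * v - scaleC (\<phi> a) v) < e)"
proof -
  obtain xs where xs: "set xs = S" using finite_list[OF S] by blast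
  obtain v where v: "\<phi> v = 1" "(\<Sum>j<length xs. norm (xs ! j * v - scaleC (\<phi> (xs ! j)) v)) < e"
    using approx_left_amen[OF ch aa e, where n="length xs" and as="\<lambda>j. xs ! j"] by blast
  have "norm (a * v - scaleC (\<phi> a) v) < e" if aS: "a \<in> S" for a
  proof -
    obtain j where j: "j < length xs" "xs ! j = a" using aS xs by (auto simp: in_set_conv_nth)
    have "norm (a * v - scaleC (\<phi> a) v) \<le> (\<Sum>j<length xs. norm (xs ! j * v - scaleC (\<phi> (xs ! j)) v))"
      using member_le_sum[of j "{..<length xs}" "\<lambda>j. norm (xs ! j * v - scaleC (\<phi> (xs ! j)) v)"] j by simp
    thus ?thesis using v(2) by simp
  qed
  thus ?thesis using v(1) by blast
qed

lemma branch_approx: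
  fixes \<phi> :: "'a::complex_banach_algebra \<Rightarrow> complex"
  assumes ch: "is_character \<phi>" and aa: "approximately_amenable TYPE('a)"
  shows "approx_left_phi_biprojective \<phi>"
proof -
  define good where "good = (\<lambda>(S, e). {v. \<phi> v = 1 \<and> (\<forall>a\<in>S. norm (a * v - scaleC (\<phi> a) v) < e)})"
  define Bs where "Bs = {(S :: 'a set, e::real). finite S \<and> 0 < e}"
  define FA where "FA = (INF b\<in>Bs. principal (good b))"
  have ev: "eventually P FA \<longleftrightarrow> (\<exists>b\<in>Bs. eventually P (principal (good b)))" for P
    unfolding FA_def
  proof (rule eventually_INF_base)
    have "({}, 1) \<in> Bs" by (simp add: Bs_def)
    thus "Bs \<noteq> {}" by blast
  next
    fix b1 b2 assume "b1 \<in> Bs" "b2 \<in> Bs"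
    then obtain S1 e1 S2 e2 where b: "b1 = (S1, e1)" "b2 = (S2, e2)" "finite S1" "finite S2" "0 < e1" "0 < e2"
      unfolding Bs_def by blast
    show "\<exists>x\<in>Bs. principal (good x) \<le> inf (principal (good b1)) (principal (good b2))"
      by (rule bexI[of _ "(S1 \<union> S2, min e1 e2)"]) (use b in \<open>auto simp: Bs_def good_def\<close>)
  qed
  have goodI: "v \<in> good (S, e) \<longleftrightarrow> \<phi> v = 1 \<and> (\<forall>a\<in>S. norm (a * v - scaleC (\<phi> a) v) < e)" for v S e
    by (simp add: good_def)
  have FAnb: "FA \<noteq> bot"
  proof
    assume "FA = bot"
    hence "eventually (\<lambda>_. False) FA" by simp
    then obtain b where b: "b \<in> Bs" "eventually (\<lambda>_. False) (principal (good b))" using ev by blast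
    obtain S e where Se: "b = (S, e)" "finite S" "0 < e" using b(1) unfolding Bs_def by blast
    obtain v where "\<phi> v = 1 \<and> (\<forall>a\<in>S. norm (a * v - scaleC (\<phi> a) v) < e)"
      using good_nonempty[OF ch aa Se(2,3)] by blast
    hence "v \<in> good b" unfolding Se(1) goodI .
    thus False using b(2) unfolding eventually_principal by blast
  qed
  have B1: "({}, 1) \<in> Bs" by (simp add: Bs_def)
  have ev1: "eventually (\<lambda>v. \<phi> v = 1) FA"
    unfolding ev
  proof (rule bexI[OF _ B1])
    show "eventually (\<lambda>v. \<phi> v = 1) (principal (good ({}, 1)))"
      unfolding eventually_principal using goodI by blast
  qed
  have lim: "((\<lambda>v. norm (a * v - scaleC (\<phi> a) v)) \<longlongrightarrow> 0) FA" for a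
  proof (rule order_tendstoI)
    fix e :: real assume e: "0 < e"
    have Ba: "({a}, e) \<in> Bs" using e by (simp add: Bs_def)
    show "eventually (\<lambda>v. norm (a * v - scaleC (\<phi> a) v) < e) FA"
      unfolding ev
    proof (rule bexI[OF _ Ba])
      show "eventually (\<lambda>v. norm (a * v - scaleC (\<phi> a) v) < e) (principal (good ({a}, e)))"
        unfolding eventually_principal using goodI by blast
    qed
  next
    fix e :: real assume e: "e < 0"
    have "e < norm (a * v - scaleC (\<phi> a) v)" for v using e norm_ge_zero[of "a * v - scaleC (\<phi> a) v"] by linarith
    thus "eventually (\<lambda>v. e < norm (a * v - scaleC (\<phi> a) v)) FA" by (intro always_eventually allI)
  qed
  obtain w where w: "\<phi> w = 1" using char_unit[OF ch] by blast
  define G where "G = filtermap (\<lambda>v. sgl v w) FA"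
  show ?thesis
  proof (rule final_construction[OF ch, of G])
    show "G \<noteq> bot" using FAnb by (simp add: G_def filtermap_bot_iff)
    show "eventually trep G" unfolding G_def eventually_filtermap by (simp add: trep_sgl)
  next
    fix a
    have bnd: "pnorm (tdiff (tlact a (sgl v w)) (tscale (\<phi> a) (sgl v w))) \<le> norm w * norm (a * v - scaleC (\<phi> a) v)" for v
    proof -
      have "teq (sgl (a * v - scaleC (\<phi> a) v) w) (tdiff (tlact a (sgl v w)) (tscale (\<phi> a) (sgl v w)))"
        unfolding teq_def
      proof (intro allI impI)
        fix B :: "'a \<Rightarrow> 'a \<Rightarrow> complex" assume B: "bounded_bilinear_form B"
        show "tev B (sgl (a * v - scaleC (\<phi> a) v) w) = tev B (tdiff (tlact a (sgl v w)) (tscale (\<phi> a) (sgl v w)))"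
          unfolding tlact_sgl tscale_sgl tev_tdiff[OF trep_sgl trep_sgl B] tev_sgl[OF B]
          by (simp add: bbf_diff1[OF B] bbf_scale1[OF B])
      qed
      hence "pnorm (tdiff (tlact a (sgl v w)) (tscale (\<phi> a) (sgl v w))) \<le> tval (sgl (a * v - scaleC (\<phi> a) v) w)"
        by (rule pnorm_le[OF trep_sgl])
      thus ?thesis by (simp add: tval_sgl mult.commute)
    qed
    have "((\<lambda>v. pnorm (tdiff (tlact a (sgl v w)) (tscale (\<phi> a) (sgl v w)))) \<longlongrightarrow> 0) FA"
    proof (rule tendsto_sandwich[of "\<lambda>_. 0" _ FA "\<lambda>v. norm w * norm (a * v - scaleC (\<phi> a) v)"])
      show "eventually (\<lambda>v. 0 \<le> pnorm (tdiff (tlact a (sgl v w)) (tscale (\<phi> a) (sgl v w)))) FA"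
        by (intro always_eventually allI pnorm_nonneg trep_tdiff trep_tlact trep_tscale trep_sgl)
      show "eventually (\<lambda>v. pnorm (tdiff (tlact a (sgl v w)) (tscale (\<phi> a) (sgl v w))) \<le> norm w * norm (a * v - scaleC (\<phi> a) v)) FA"
        by (intro always_eventually allI bnd)
      show "((\<lambda>_. 0::real) \<longlongrightarrow> 0) FA" by (rule tendsto_const)
      have "((\<lambda>v. norm w * norm (a * v - scaleC (\<phi> a) v)) \<longlongrightarrow> norm w * 0) FA"
        by (intro tendsto_mult tendsto_const lim)
      thus "((\<lambda>v. norm w * norm (a * v - scaleC (\<phi> a) v)) \<longlongrightarrow> 0) FA" by simp
    qed
    thus "((\<lambda>n. pnorm (tdiff (tlact a n) (tscale (\<phi> a) n))) \<longlongrightarrow> 0) G"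
      unfolding G_def filterlim_filtermap o_def .
  next
    have "eventually (\<lambda>v. \<phi> (tpi (sgl v w)) = 1) FA"
      using ev1 by (rule eventually_mono) (simp add: tpi_sgl char_mult[OF ch] w)
    hence "((\<lambda>v. \<phi> (tpi (sgl v w))) \<longlongrightarrow> 1) FA"
      by (rule tendsto_eventually)
    thus "((\<lambda>n. \<phi> (tpi n)) \<longlongrightarrow> 1) G"
      unfolding G_def filterlim_filtermap o_def .
  qed
qed

theorem mainTheorem5:
  fixes \<phi> :: "'a::complex_banach_algebra \<Rightarrow> complex"
  assumes "is_character \<phi>"
    and "pseudo_amenable TYPE('a) \<or> approximately_amenable TYPE('a)"
  shows "approx_left_phi_biprojective \<phi>"
  using assms branch_pseudo branch_approx by blast


end
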